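(* Let $B\wr\mathcal{H}(d)$ be a quantum wreath product as in the context, and suppose $B$ has an algebra anti-automorphism $b\mapsto b^*$; extend it factorwise to $B^{\otimes k}$. Let $A$ be the free associative $K$-algebra generated by $B^{\otimes d}$ and symbols $H_1,\dots,H_{d-1}$, and let $*:A\to B\wr\mathcal{H}(d)$ be the algebra anti-homomorphism with $b_1\otimes\cdots\otimes b_d\mapsto b_1^*\otimes\cdots\otimes b_d^*$ and $H_i\mapsto H_i$. Then $*$ induces an anti-homomorphism $B\wr\mathcal{H}(d)\to B\wr\mathcal{H}(d)$ if and only if (1) $\sigma(S^* )=S$ and $\rho(S^* )+R^*=R$; (2) for all $b\in B\otimes B$: $\sigma(\sigma(b)^* )=b^*$ and $\rho(\sigma(b)^* )+\rho(b)^*=0$. In this case $*$ is an anti-automorphism of $B\wr\mathcal{H}(d)$.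
   Context: Let $K$ be a commutative ring and $B$ a unital associative $K$-algebra, free over $K$; tensor products over $K$. Fix $d\ge2$, $S,R\in B\otimes B$ and $K$-linear maps $\sigma,\rho:B\otimes B\to B\otimes B$. For $Z\in B\otimes B$, $Z_i:=1^{\otimes(i-1)}\otimes Z\otimes1^{\otimes(d-i-1)}\in B^{\otimes d}$; for $\phi\in\mathrm{End}_K(B\otimes B)$, $\phi_i$ is $\phi$ applied to tensor factors $i,i+1$ of $B^{\otimes d}$. The quantum wreath product $B\wr\mathcal{H}(d)$ is the unital $K$-algebra generated by the algebra $B^{\otimes d}$ and $H_1,\dots,H_{d-1}$ subject to $H_kH_{k+1}H_k=H_{k+1}H_kH_{k+1}$, $H_iH_j=H_jH_i$ ($|i-j|\ge2$), $H_i^2=S_iH_i+R_i$, $H_ib=\sigma_i(b)H_i+\rho_i(b)$ ($b\in B^{\otimes d}$). With $H_w$ defined via reduced expressions of $w\in\Sigma_d$, it is assumed that $B\wr\mathcal{H}(d)$ has a PBW basis $\{(b_{j_1}\otimes\cdots\otimes b_{j_d})H_w\}$ for a $K$-basis $\{b_j\}$ of $B$. *)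

theory Defs
  imports "HOL-Library.Poly_Mapping" "HOL-Combinatorics.Transposition" "HOL-Combinatorics.Permutations"
begin

text \<open>The algebra B,
  free over K with basis indexed by the type 'j, is represented by its coordinate space
  'j =>0 'k (finitely supported coefficient functions); its multiplication mulB and unit oneB
  are arbitrary data satisfying the K-algebra axioms.  Tensor powers of B are represented in
  coordinates w.r.t. the tensor basis: an element of B tensor-power n is an element of
  'j list =>0 'k all of whose support lists have length n (tens_space n).\<close>

definition pscale :: "'k::comm_ring_1 \<Rightarrow> ('a \<Rightarrow>\<^sub>0 'k) \<Rightarrow> ('a \<Rightarrow>\<^sub>0 'k)" where
  "pscale c x = Poly_Mapping.map (\<lambda>v. c * v) x"

definition lin_ext :: "('a \<Rightarrow> ('b \<Rightarrow>\<^sub>0 'k::comm_ring_1)) \<Rightarrow> ('a \<Rightarrow>\<^sub>0 'k) \<Rightarrow> ('b \<Rightarrow>\<^sub>0 'k)" where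
  "lin_ext f x = (\<Sum>a\<in>Poly_Mapping.keys x. pscale (Poly_Mapping.lookup x a) (f a))"

definition tens_space :: "nat \<Rightarrow> ('j list \<Rightarrow>\<^sub>0 'k::zero) set" where
  "tens_space n = {x. \<forall>a\<in>Poly_Mapping.keys x. length a = n}"

definition tprod :: "('j list \<Rightarrow>\<^sub>0 'k::comm_ring_1) \<Rightarrow> ('j list \<Rightarrow>\<^sub>0 'k) \<Rightarrow> ('j list \<Rightarrow>\<^sub>0 'k)" where
  "tprod x y = (\<Sum>a\<in>Poly_Mapping.keys x. \<Sum>b\<in>Poly_Mapping.keys y. Poly_Mapping.single (a @ b) (Poly_Mapping.lookup x a * Poly_Mapping.lookup y b))"

definition lift1 :: "('j \<Rightarrow>\<^sub>0 'k::comm_ring_1) \<Rightarrow> ('j list \<Rightarrow>\<^sub>0 'k)" where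
  "lift1 b = (\<Sum>j\<in>Poly_Mapping.keys b. Poly_Mapping.single [j] (Poly_Mapping.lookup b j))"

definition pure :: "('j \<Rightarrow>\<^sub>0 'k::comm_ring_1) list \<Rightarrow> ('j list \<Rightarrow>\<^sub>0 'k)" where
  "pure bs = foldr (\<lambda>b t. tprod (lift1 b) t) bs (Poly_Mapping.single [] 1)"

definition ebasis :: "'a \<Rightarrow> ('a \<Rightarrow>\<^sub>0 'k::comm_ring_1)" where
  "ebasis a = Poly_Mapping.single a 1"

definition mulT :: "(('j \<Rightarrow>\<^sub>0 'k) \<Rightarrow> ('j \<Rightarrow>\<^sub>0 'k) \<Rightarrow> ('j \<Rightarrow>\<^sub>0 'k::comm_ring_1))
    \<Rightarrow> ('j list \<Rightarrow>\<^sub>0 'k) \<Rightarrow> ('j list \<Rightarrow>\<^sub>0 'k) \<Rightarrow> ('j list \<Rightarrow>\<^sub>0 'k)" where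
  "mulT mulB x y = (\<Sum>a\<in>Poly_Mapping.keys x. \<Sum>b\<in>Poly_Mapping.keys y. pscale (Poly_Mapping.lookup x a * Poly_Mapping.lookup y b)
      (if length a = length b then pure (map2 (\<lambda>i j. mulB (ebasis i) (ebasis j)) a b) else 0))"

definition oneT :: "('j \<Rightarrow>\<^sub>0 'k::comm_ring_1) \<Rightarrow> nat \<Rightarrow> ('j list \<Rightarrow>\<^sub>0 'k)" where
  "oneT oneB n = pure (replicate n oneB)"

definition starT :: "(('j \<Rightarrow>\<^sub>0 'k) \<Rightarrow> ('j \<Rightarrow>\<^sub>0 'k::comm_ring_1)) \<Rightarrow> ('j list \<Rightarrow>\<^sub>0 'k) \<Rightarrow> ('j list \<Rightarrow>\<^sub>0 'k)" where
  "starT starB x = lin_ext (\<lambda>a. pure (map (\<lambda>j. starB (ebasis j)) a)) x"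

text \<open>Z_i = 1^(i-1) (x) Z (x) 1^(d-i-1) in B^(x)d (1-based i).\<close>
definition emb :: "('j \<Rightarrow>\<^sub>0 'k::comm_ring_1) \<Rightarrow> nat \<Rightarrow> nat \<Rightarrow> ('j list \<Rightarrow>\<^sub>0 'k) \<Rightarrow> ('j list \<Rightarrow>\<^sub>0 'k)" where
  "emb oneB d i Z = tprod (pure (replicate (i - 1) oneB)) (tprod Z (pure (replicate (d - i - 1) oneB)))"

text \<open>phi_i: phi applied to tensor factors i, i+1 (1-based) of B^(x)d, extended K-linearly.\<close>
definition loc :: "nat \<Rightarrow> (('j list \<Rightarrow>\<^sub>0 'k) \<Rightarrow> ('j list \<Rightarrow>\<^sub>0 'k::comm_ring_1))
    \<Rightarrow> ('j list \<Rightarrow>\<^sub>0 'k) \<Rightarrow> ('j list \<Rightarrow>\<^sub>0 'k)" where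
  "loc i \<phi> x = lin_ext (\<lambda>a. tprod (ebasis (take (i - 1) a))
       (tprod (\<phi> (ebasis [a ! (i - 1), a ! i])) (ebasis (drop (i + 1) a)))) x"

definition lin_on :: "('a \<Rightarrow>\<^sub>0 'k::comm_ring_1) set \<Rightarrow> (('a \<Rightarrow>\<^sub>0 'k) \<Rightarrow> ('b \<Rightarrow>\<^sub>0 'k)) \<Rightarrow> bool" where
  "lin_on A f \<longleftrightarrow> (\<forall>x\<in>A. \<forall>y\<in>A. f (x + y) = f x + f y) \<and> (\<forall>c. \<forall>x\<in>A. f (pscale c x) = pscale c (f x))"

definition K_algebra_B :: "(('j \<Rightarrow>\<^sub>0 'k) \<Rightarrow> ('j \<Rightarrow>\<^sub>0 'k) \<Rightarrow> ('j \<Rightarrow>\<^sub>0 'k::comm_ring_1)) \<Rightarrow> ('j \<Rightarrow>\<^sub>0 'k) \<Rightarrow> bool" where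
  "K_algebra_B mulB oneB \<longleftrightarrow>
     (\<forall>x y z. mulB (mulB x y) z = mulB x (mulB y z)) \<and>
     (\<forall>x. mulB oneB x = x \<and> mulB x oneB = x) \<and>
     (\<forall>x y z. mulB (x + y) z = mulB x z + mulB y z \<and> mulB x (y + z) = mulB x y + mulB x z) \<and>
     (\<forall>c x y. mulB (pscale c x) y = pscale c (mulB x y) \<and> mulB x (pscale c y) = pscale c (mulB x y))"

definition anti_automorphism_B :: "(('j \<Rightarrow>\<^sub>0 'k) \<Rightarrow> ('j \<Rightarrow>\<^sub>0 'k) \<Rightarrow> ('j \<Rightarrow>\<^sub>0 'k::comm_ring_1)) \<Rightarrow> ('j \<Rightarrow>\<^sub>0 'k)
    \<Rightarrow> (('j \<Rightarrow>\<^sub>0 'k) \<Rightarrow> ('j \<Rightarrow>\<^sub>0 'k)) \<Rightarrow> bool" where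
  "anti_automorphism_B mulB oneB starB \<longleftrightarrow>
     lin_on UNIV starB \<and> bij starB \<and> starB oneB = oneB \<and>
     (\<forall>x y. starB (mulB x y) = mulB (starB y) (starB x))"

definition K_algebra_W :: "('k::comm_ring_1 \<Rightarrow> 'w::ring_1 \<Rightarrow> 'w) \<Rightarrow> bool" where
  "K_algebra_W smul \<longleftrightarrow>
     (\<forall>c x y. smul c (x + y) = smul c x + smul c y) \<and>
     (\<forall>c c' x. smul (c + c') x = smul c x + smul c' x) \<and>
     (\<forall>c c' x. smul (c * c') x = smul c (smul c' x)) \<and>
     (\<forall>x. smul 1 x = x) \<and>
     (\<forall>c x y. smul c (x * y) = smul c x * y \<and> smul c (x * y) = x * smul c y)"

definition anti_hom_W :: "('k::comm_ring_1 \<Rightarrow> 'w::ring_1 \<Rightarrow> 'w) \<Rightarrow> ('w \<Rightarrow> 'w) \<Rightarrow> bool" where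
  "anti_hom_W smul \<phi> \<longleftrightarrow>
     (\<forall>x y. \<phi> (x + y) = \<phi> x + \<phi> y) \<and> (\<forall>c x. \<phi> (smul c x) = smul c (\<phi> x)) \<and>
     \<phi> 1 = 1 \<and> (\<forall>x y. \<phi> (x * y) = \<phi> y * \<phi> x)"

definition sref :: "nat \<Rightarrow> nat \<Rightarrow> nat" where
  "sref i = Transposition.transpose i (Suc i)"

definition word_perm :: "nat list \<Rightarrow> nat \<Rightarrow> nat" where
  "word_perm ws = foldr (\<lambda>i p. sref i \<circ> p) ws id"

definition reduced_word :: "nat \<Rightarrow> (nat \<Rightarrow> nat) \<Rightarrow> nat list \<Rightarrow> bool" where
  "reduced_word d w ws \<longleftrightarrow> set ws \<subseteq> {1..<d} \<and> word_perm ws = w \<and>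
     (\<forall>vs. set vs \<subseteq> {1..<d} \<and> word_perm vs = w \<longrightarrow> length ws \<le> length vs)"

definition Hw :: "(nat \<Rightarrow> 'w::monoid_mult) \<Rightarrow> nat \<Rightarrow> (nat \<Rightarrow> nat) \<Rightarrow> 'w" where
  "Hw H d w = prod_list (map H (SOME ws. reduced_word d w ws))"

text \<open>The defining relations of the quantum wreath product, for the K-algebra 'w with the
  algebra map iota : B^(x)d -> 'w and elements H 1, ..., H (d-1).\<close>
definition qwp_relations ::
  "('k::comm_ring_1 \<Rightarrow> 'w::ring_1 \<Rightarrow> 'w) \<Rightarrow> (('j list \<Rightarrow>\<^sub>0 'k) \<Rightarrow> 'w) \<Rightarrow> (nat \<Rightarrow> 'w) \<Rightarrow> nat
   \<Rightarrow> (('j \<Rightarrow>\<^sub>0 'k) \<Rightarrow> ('j \<Rightarrow>\<^sub>0 'k) \<Rightarrow> ('j \<Rightarrow>\<^sub>0 'k)) \<Rightarrow> ('j \<Rightarrow>\<^sub>0 'k)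
   \<Rightarrow> ('j list \<Rightarrow>\<^sub>0 'k) \<Rightarrow> ('j list \<Rightarrow>\<^sub>0 'k)
   \<Rightarrow> (('j list \<Rightarrow>\<^sub>0 'k) \<Rightarrow> ('j list \<Rightarrow>\<^sub>0 'k)) \<Rightarrow> (('j list \<Rightarrow>\<^sub>0 'k) \<Rightarrow> ('j list \<Rightarrow>\<^sub>0 'k)) \<Rightarrow> bool" where
  "qwp_relations smul iota H d mulB oneB S R \<sigma> \<rho> \<longleftrightarrow>
     K_algebra_W smul \<and>
     (\<forall>x\<in>tens_space d. \<forall>y\<in>tens_space d.
         iota (x + y) = iota x + iota y \<and> iota (mulT mulB x y) = iota x * iota y) \<and>
     (\<forall>c. \<forall>x\<in>tens_space d. iota (pscale c x) = smul c (iota x)) \<and>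
     iota (oneT oneB d) = 1 \<and>
     (\<forall>k. 1 \<le> k \<and> k + 1 < d \<longrightarrow> H k * H (k + 1) * H k = H (k + 1) * H k * H (k + 1)) \<and>
     (\<forall>i\<in>{1..<d}. \<forall>j\<in>{1..<d}. i + 2 \<le> j \<or> j + 2 \<le> i \<longrightarrow> H i * H j = H j * H i) \<and>
     (\<forall>i\<in>{1..<d}. H i * H i = iota (emb oneB d i S) * H i + iota (emb oneB d i R)) \<and>
     (\<forall>i\<in>{1..<d}. \<forall>b\<in>tens_space d.
         H i * iota b = iota (loc i \<sigma> b) * H i + iota (loc i \<rho> b))"

definition has_PBW_basis ::
  "('k::comm_ring_1 \<Rightarrow> 'w::ring_1 \<Rightarrow> 'w) \<Rightarrow> (('j list \<Rightarrow>\<^sub>0 'k) \<Rightarrow> 'w) \<Rightarrow> (nat \<Rightarrow> 'w) \<Rightarrow> nat \<Rightarrow> bool" where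
  "has_PBW_basis smul iota H d \<longleftrightarrow>
     (\<forall>x. \<exists>!f :: ('j list \<times> (nat \<Rightarrow> nat)) \<Rightarrow>\<^sub>0 'k.
        Poly_Mapping.keys f \<subseteq> {(a, w). length a = d \<and> w permutes {1..d}} \<and>
        x = (\<Sum>p\<in>Poly_Mapping.keys f. smul (Poly_Mapping.lookup f p) (iota (ebasis (fst p)) * Hw H d (snd p))))"

end

theory Submission
  imports Defs
begin


section \<open>Combinatorics of reduced words\<close>

definition ninv :: "nat \<Rightarrow> (nat \<Rightarrow> nat) \<Rightarrow> nat" where
  "ninv d w = card {(p,q). 1 \<le> p \<and> p < q \<and> q \<le> d \<and> w q < w p}"

lemma word_perm_Nil [simp]: "word_perm [] = id"
  by (simp add: word_perm_def)

lemma word_perm_Cons [simp]: "word_perm (i # u) = sref i \<circ> word_perm u"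
  by (simp add: word_perm_def)

lemma word_perm_append: "word_perm (u @ v) = word_perm u \<circ> word_perm v"
  by (induction u) (auto simp: comp_assoc)

lemma word_perm_snoc: "word_perm (u @ [i]) = word_perm u \<circ> sref i"
  by (simp add: word_perm_append)

lemma sref_permutes: "i \<in> {1..<d} \<Longrightarrow> sref i permutes {1..d}"
  unfolding sref_def by (rule permutes_swap_id) auto

lemma perm_comp_sref: "w permutes {1..d} \<Longrightarrow> i \<in> {1..<d} \<Longrightarrow> w \<circ> sref i permutes {1..d}"
  by (metis permutes_compose sref_permutes)

lemma perm_sref_comp: "w permutes {1..d} \<Longrightarrow> i \<in> {1..<d} \<Longrightarrow> sref i \<circ> w permutes {1..d}"
  by (metis permutes_compose sref_permutes)

lemma word_perm_permutes: "set u \<subseteq> {1..<d} \<Longrightarrow> word_perm u permutes {1..d}"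
proof (induction u)
  case Nil then show ?case by (simp add: permutes_id id_def[symmetric])
next
  case (Cons i u)
  have a: "word_perm u permutes {1..d}" using Cons by simp
  have b: "sref i permutes {1..d}" using Cons.prems by (intro sref_permutes) simp
  have "i \<in> {1..<d}" using Cons.prems by simp
  then have "sref i \<circ> word_perm u permutes {1..d}" by (rule perm_sref_comp[OF a])
  then show ?case by (simp only: word_perm_Cons)
qed

lemma sref_sref [simp]: "sref i \<circ> sref i = id"
  by (simp add: sref_def)

lemma sref_sref_apply [simp]: "sref i (sref i x) = x"
  by (simp add: sref_def)

lemma sref_comm: "i + 2 \<le> j \<or> j + 2 \<le> i \<Longrightarrow> sref i \<circ> sref j = sref j \<circ> sref i"
  by (auto simp: fun_eq_iff sref_def transpose_def)

lemma sref_braid: "sref i \<circ> sref (Suc i) \<circ> sref i = sref (Suc i) \<circ> sref i \<circ> sref (Suc i)"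
  by (auto simp: fun_eq_iff sref_def transpose_def)

lemma ninv_finite: "finite {(p,q). 1 \<le> p \<and> p < q \<and> q \<le> (d::nat) \<and> w q < (w p::nat)}"
  by (rule finite_subset[of _ "{1..d} \<times> {1..d}"]) auto

lemma ninv_id [simp]: "ninv d id = 0"
proof -
  have "{(p,q). 1 \<le> p \<and> p < q \<and> q \<le> d \<and> id q < (id p::nat)} = {}" by auto
  then show ?thesis unfolding ninv_def by (metis card.empty)
qed

lemma ninv_id' [simp]: "ninv d (\<lambda>a. a) = 0"
  using ninv_id by (simp add: id_def)

lemma sref_order:
  assumes "p < q" "(p, q) \<noteq> (i, Suc i)"
  shows "sref i p < sref i q"
  using assms by (auto simp: sref_def transpose_def)

lemma ninv_step:
  assumes w: "w permutes {1..d}" and i: "i \<in> {1..<d}"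
  shows "(w i < w (Suc i) \<longrightarrow> ninv d (w \<circ> sref i) = Suc (ninv d w)) \<and>
         (w (Suc i) < w i \<longrightarrow> ninv d w = Suc (ninv d (w \<circ> sref i)))"
proof -
  define I where "I = (\<lambda>v::nat\<Rightarrow>nat. {(p,q). 1 \<le> p \<and> p < q \<and> q \<le> d \<and> v q < v p})"
  define s where "s = sref i"
  define f where "f = (\<lambda>(p,q). (s p, s q))"
  define t where "t = (i, Suc i)"
  have fin: "finite (I v)" for v unfolding I_def by (rule ninv_finite)
  have ss: "s (s x) = x" for x by (simp add: s_def)
  have srange: "1 \<le> x \<Longrightarrow> x \<le> d \<Longrightarrow> 1 \<le> s x \<and> s x \<le> d" for x
    using i by (auto simp: s_def sref_def transpose_def)
  have fI: "f ` (I w - {t}) \<subseteq> I (w \<circ> s) - {t}"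
  proof
    fix x assume "x \<in> f ` (I w - {t})"
    then obtain p q where pq: "(p,q) \<in> I w" "(p,q) \<noteq> t" and x: "x = (s p, s q)"
      by (auto simp: f_def)
    have "s p < s q" using pq sref_order[of p q i] by (auto simp: I_def t_def s_def)
    moreover have "(s p, s q) \<noteq> t"
    proof
      assume "(s p, s q) = t"
      then have "s p = i" "s q = Suc i" by (auto simp: t_def)
      then have "p = s i" "q = s (Suc i)" using ss by metis+
      then have "p = Suc i" "q = i" by (auto simp: s_def sref_def)
      then show False using pq(1) by (auto simp: I_def)
    qed
    ultimately show "x \<in> I (w \<circ> s) - {t}" using pq srange x by (auto simp: I_def ss)
  qed
  have gI: "f ` (I (w \<circ> s) - {t}) \<subseteq> I w - {t}"
  proof
    fix x assume "x \<in> f ` (I (w \<circ> s) - {t})"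
    then obtain p q where pq: "(p,q) \<in> I (w \<circ> s)" "(p,q) \<noteq> t" and x: "x = (s p, s q)"
      by (auto simp: f_def)
    have "s p < s q" using pq sref_order[of p q i] by (auto simp: I_def t_def s_def)
    moreover have "(s p, s q) \<noteq> t"
    proof
      assume "(s p, s q) = t"
      then have "s p = i" "s q = Suc i" by (auto simp: t_def)
      then have "p = s i" "q = s (Suc i)" using ss by metis+
      then have "p = Suc i" "q = i" by (auto simp: s_def sref_def)
      then show False using pq(1) by (auto simp: I_def)
    qed
    ultimately show "x \<in> I w - {t}" using pq srange x by (auto simp: I_def ss)
  qed
  have ff: "f (f x) = x" for x by (cases x) (simp add: f_def ss)
  have injf: "inj f" by (metis ff injI)
  have eqc: "card (I (w \<circ> s) - {t}) = card (I w - {t})"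
  proof -
    have "card (f ` (I w - {t})) \<le> card (I (w \<circ> s) - {t})"
      by (rule card_mono) (use fin fI in auto)
    moreover have "card (f ` (I (w \<circ> s) - {t})) \<le> card (I w - {t})"
      by (rule card_mono) (use fin gI in auto)
    moreover have "card (f ` (I w - {t})) = card (I w - {t})"
      by (rule card_image) (use injf inj_on_subset in blast)
    moreover have "card (f ` (I (w \<circ> s) - {t})) = card (I (w \<circ> s) - {t})"
      by (rule card_image) (use injf inj_on_subset in blast)
    ultimately show ?thesis by linarith
  qed
  have ws1: "(w \<circ> s) i = w (Suc i)" "(w \<circ> s) (Suc i) = w i"
    by (auto simp: s_def sref_def)
  have i1: "1 \<le> i" "Suc i \<le> d" using i by auto
  show ?thesis
  proof (intro conjI impI)
    assume a: "w i < w (Suc i)"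
    have "t \<in> I (w \<circ> s)" using ws1 a i1 by (auto simp: I_def t_def)
    moreover have "t \<notin> I w" using a by (auto simp: I_def t_def)
    moreover have "card (I (w \<circ> s)) = Suc (card (I (w \<circ> s) - {t}))"
      using card_Suc_Diff1[OF fin \<open>t \<in> I (w \<circ> s)\<close>] by simp
    moreover have "I w - {t} = I w" using \<open>t \<notin> I w\<close> by auto
    ultimately have "card (I (w \<circ> s)) = Suc (card (I w))"
      using eqc by simp
    then show "ninv d (w \<circ> sref i) = Suc (ninv d w)"
      by (simp add: ninv_def I_def s_def)
  next
    assume a: "w (Suc i) < w i"
    have "t \<notin> I (w \<circ> s)" using ws1 a by (auto simp: I_def t_def)
    moreover have "t \<in> I w" using a i1 by (auto simp: I_def t_def)
    moreover have "card (I w) = Suc (card (I w - {t}))"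
      using card_Suc_Diff1[OF fin \<open>t \<in> I w\<close>] by simp
    moreover have "I (w \<circ> s) - {t} = I (w \<circ> s)" using \<open>t \<notin> I (w \<circ> s)\<close> by auto
    ultimately have "card (I w) = Suc (card (I (w \<circ> s)))"
      using eqc by simp
    then show "ninv d w = Suc (ninv d (w \<circ> sref i))"
      by (simp add: ninv_def I_def s_def)
  qed
qed

lemma permutes_neq_apply:
  assumes "w permutes A" "x \<noteq> y" shows "w x \<noteq> w y"
  using assms by (metis permutes_inj injD)

lemma ninv_asc:
  "w permutes {1..d} \<Longrightarrow> i \<in> {1..<d} \<Longrightarrow> w i < w (Suc i) \<Longrightarrow> ninv d (w \<circ> sref i) = Suc (ninv d w)"
  using ninv_step by blast

lemma ninv_desc:
  "w permutes {1..d} \<Longrightarrow> i \<in> {1..<d} \<Longrightarrow> w (Suc i) < w i \<Longrightarrow> ninv d w = Suc (ninv d (w \<circ> sref i))"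
  using ninv_step by blast

lemma ninv_pm:
  assumes "w permutes {1..d}" "i \<in> {1..<d}"
  shows "ninv d (w \<circ> sref i) = Suc (ninv d w) \<or> ninv d w = Suc (ninv d (w \<circ> sref i))"
proof -
  have "w i \<noteq> w (Suc i)" using permutes_neq_apply[OF assms(1)] by auto
  then show ?thesis using ninv_asc[OF assms] ninv_desc[OF assms] by linarith
qed

lemma ninv_le_length: "set u \<subseteq> {1..<d} \<Longrightarrow> ninv d (word_perm u) \<le> length u"
proof (induction u rule: rev_induct)
  case Nil then show ?case by simp
next
  case (snoc i u)
  then have "word_perm u permutes {1..d}" "set u \<subseteq> {1..<d}" "i \<in> {1..<d}"
    using word_perm_permutes by auto
  then have "ninv d (word_perm u \<circ> sref i) \<le> Suc (length u)"
    using snoc ninv_pm[of "word_perm u" d i] by auto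
  then show ?case unfolding word_perm_snoc length_append_singleton .
qed

lemma mono_chain:
  fixes w :: "nat \<Rightarrow> nat"
  assumes "\<forall>i. p \<le> i \<and> i < q \<longrightarrow> w i < w (Suc i)" "p < q"
  shows "w p < w q"
  using assms
proof (induction q)
  case 0 then show ?case by simp
next
  case (Suc q)
  show ?case
  proof (cases "p = q")
    case True then show ?thesis using Suc.prems by auto
  next
    case False
    then have pq: "p < q" using Suc.prems(2) by simp
    have h: "\<forall>i. p \<le> i \<and> i < q \<longrightarrow> w i < w (Suc i)" using Suc.prems(1) by simp
    have "w p < w q" using Suc.IH[OF h pq] .
    moreover have "w q < w (Suc q)" using Suc.prems(1) pq by simp
    ultimately show ?thesis by simp
  qed
qed

lemma sorted_perm_id:
  assumes w: "w permutes {1..d}" and m: "\<forall>i\<in>{1..<d}. w i < w (Suc i)"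
  shows "w = id"
proof -
  have rng: "x \<in> {1..d} \<Longrightarrow> w x \<in> {1..d}" for x using w by (metis permutes_in_image)
  have lo: "k \<in> {1..d} \<Longrightarrow> k \<le> w k" for k
  proof (induction k)
    case 0 then show ?case by simp
  next
    case (Suc k)
    show ?case
    proof (cases "k = 0")
      case True then show ?thesis using rng[OF Suc.prems] by auto
    next
      case False
      then have "k \<le> w k" using Suc by auto
      moreover have "w k < w (Suc k)" using m Suc.prems False by auto
      ultimately show ?thesis by simp
    qed
  qed
  have hi: "j < d \<Longrightarrow> w (d - j) \<le> d - j" for j
  proof (induction j)
    case 0 then show ?case using rng[of d] by auto
  next
    case (Suc j)
    have "w (d - Suc j) < w (Suc (d - Suc j))" using m Suc.prems by auto
    moreover have "Suc (d - Suc j) = d - j" using Suc.prems by auto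
    ultimately show ?case using Suc by auto
  qed
  have A: "w k = k" if "k \<in> {1..d}" for k
  proof -
    have "w (d - (d - k)) \<le> d - (d - k)" using hi[of "d - k"] that by auto
    then have "w k \<le> k" using that by auto
    then show ?thesis using lo[OF that] by auto
  qed
  have B: "w k = k" if "k \<notin> {1..d}" for k using w that by (simp add: permutes_not_in)
  show ?thesis
  proof (rule ext)
    fix k show "w k = id k" using A B by (cases "k \<in> {1..d}") simp_all
  qed
qed

lemma exists_desc:
  assumes w: "w permutes {1..d}" and "w \<noteq> id"
  shows "\<exists>i\<in>{1..<d}. w (Suc i) < w i"
proof (rule ccontr)
  assume nd: "\<not> ?thesis"
  have "\<forall>i\<in>{1..<d}. w i < w (Suc i)"
  proof
    fix i assume i: "i \<in> {1..<d}"
    have "w i \<noteq> w (Suc i)" using permutes_neq_apply[OF w] by simp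
    moreover have "\<not> w (Suc i) < w i" using nd i by blast
    ultimately show "w i < w (Suc i)" by simp
  qed
  then show False using sorted_perm_id[OF w] assms(2) by blast
qed

lemma exists_reduced:
  "w permutes {1..d} \<Longrightarrow> \<exists>u. set u \<subseteq> {1..<d} \<and> word_perm u = w \<and> length u = ninv d w"
proof (induction "ninv d w" arbitrary: w)
  case 0
  show ?case
  proof (cases "w = id")
    case True then show ?thesis by (intro exI[of _ "[]"]) simp
  next
    case False
    then obtain i where i: "i \<in> {1..<d}" "w (Suc i) < w i" using exists_desc[OF 0(2)] by blast
    then show ?thesis using ninv_desc[OF 0(2) i(1) i(2)] 0(1) by simp
  qed
next
  case (Suc n)
  have "w \<noteq> id" using Suc(2) by auto
  then obtain i where i: "i \<in> {1..<d}" "w (Suc i) < w i" using exists_desc[OF Suc(3)] by blast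
  have n: "ninv d (w \<circ> sref i) = n" using ninv_desc[OF Suc(3) i] Suc(2) by simp
  have wsp: "w \<circ> sref i permutes {1..d}" using perm_comp_sref[OF Suc(3) i(1)] .
  obtain u where u: "set u \<subseteq> {1..<d}" "word_perm u = w \<circ> sref i" "length u = n"
    using Suc(1)[OF n[symmetric] wsp] n by auto
  have "word_perm (u @ [i]) = w" using u(2) by (simp add: word_perm_snoc comp_assoc)
  then show ?case using u i Suc(2) by (intro exI[of _ "u @ [i]"]) auto
qed

inductive beq :: "nat \<Rightarrow> nat list \<Rightarrow> nat list \<Rightarrow> bool" for d where
  beq_refl: "beq d u u"
| beq_sym: "beq d u v \<Longrightarrow> beq d v u"
| beq_trans: "beq d u v \<Longrightarrow> beq d v w \<Longrightarrow> beq d u w"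
| beq_comm: "i \<in> {1..<d} \<Longrightarrow> j \<in> {1..<d} \<Longrightarrow> i + 2 \<le> j \<or> j + 2 \<le> i \<Longrightarrow> beq d (x @ [i, j] @ y) (x @ [j, i] @ y)"
| beq_braid: "1 \<le> k \<Longrightarrow> k + 1 < d \<Longrightarrow> beq d (x @ [k, Suc k, k] @ y) (x @ [Suc k, k, Suc k] @ y)"

lemma beq_ctxt: "beq d u v \<Longrightarrow> beq d (x @ u @ y) (x @ v @ y)"
proof (induction rule: beq.induct)
  case (beq_refl u) then show ?case by (rule beq.beq_refl)
next
  case (beq_sym u v) show ?case using beq_sym.IH by (rule beq.beq_sym)
next
  case (beq_trans u v w) then show ?case by (metis beq.beq_trans)
next
  case (beq_comm i j x' y')
  then show ?case using beq.beq_comm[of i d j "x @ x'" "y' @ y"] by simp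
next
  case (beq_braid k x' y')
  then show ?case using beq.beq_braid[of k d "x @ x'" "y' @ y"] by simp
qed

lemma beq_snoc: "beq d u v \<Longrightarrow> beq d (u @ y) (v @ y)"
  using beq_ctxt[of d u v "[]" y] by simp

lemma beq_rev: "beq d u v \<Longrightarrow> beq d (rev u) (rev v)"
proof (induction rule: beq.induct)
  case (beq_refl u) then show ?case by (rule beq.beq_refl)
next
  case (beq_sym u v) show ?case using beq_sym.IH by (rule beq.beq_sym)
next
  case (beq_trans u v w) then show ?case by (metis beq.beq_trans)
next
  case (beq_comm i j x y)
  then show ?case using beq.beq_comm[of j d i "rev y" "rev x"] by auto
next
  case (beq_braid k x y)
  then show ?case using beq.beq_braid[of k d "rev y" "rev x"] by simp
qed

lemma beq_prod:
  fixes H :: "nat \<Rightarrow> 'w::monoid_mult"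
  assumes br: "\<forall>k. 1 \<le> k \<and> k + 1 < d \<longrightarrow> H k * H (k + 1) * H k = H (k + 1) * H k * H (k + 1)"
    and cm: "\<forall>i\<in>{1..<d}. \<forall>j\<in>{1..<d}. i + 2 \<le> j \<or> j + 2 \<le> i \<longrightarrow> H i * H j = H j * H i"
  shows "beq d u v \<Longrightarrow> prod_list (map H u) = prod_list (map H v)"
proof (induction rule: beq.induct)
  case (beq_comm i j x y)
  then have "H i * H j = H j * H i" using cm by blast
  then show ?case by (simp add: mult.assoc[symmetric])
next
  case (beq_braid k x y)
  then have "H k * H (Suc k) * H k = H (Suc k) * H k * H (Suc k)" using br by auto
  then show ?case by (simp add: mult.assoc[symmetric])
qed auto

subsection \<open>Matsumoto\<close>

definition redw :: "nat \<Rightarrow> nat list \<Rightarrow> bool" where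
  "redw d u \<longleftrightarrow> set u \<subseteq> {1..<d} \<and> length u = ninv d (word_perm u)"

lemma redw_permutes: "redw d u \<Longrightarrow> word_perm u permutes {1..d}"
  unfolding redw_def using word_perm_permutes by blast

lemma redw_snoc_desc:
  assumes "redw d (u @ [s])"
  shows "redw d u \<and> (word_perm (u @ [s])) (Suc s) < (word_perm (u @ [s])) s
         \<and> word_perm u = word_perm (u @ [s]) \<circ> sref s"
proof -
  let ?w = "word_perm (u @ [s])"
  have s: "s \<in> {1..<d}" and su: "set u \<subseteq> {1..<d}" using assms by (auto simp: redw_def)
  have wp: "?w permutes {1..d}" using assms by (rule redw_permutes)
  have wu: "word_perm u = ?w \<circ> sref s" by (simp add: word_perm_snoc comp_assoc)
  have le: "ninv d (word_perm u) \<le> length u" using su by (rule ninv_le_length)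
  have len: "length u + 1 = ninv d ?w" using assms by (simp add: redw_def)
  have "?w s \<noteq> ?w (Suc s)" using permutes_neq_apply[OF wp] by auto
  moreover have "\<not> ?w s < ?w (Suc s)"
    using ninv_asc[OF wp s] wu le len by auto
  ultimately have desc: "?w (Suc s) < ?w s" by auto
  then have "ninv d ?w = Suc (ninv d (word_perm u))" using ninv_desc[OF wp s] wu by simp
  then show ?thesis using desc wu len su by (auto simp: redw_def)
qed

lemma redw_from:
  assumes "y permutes {1..d}" "set z \<subseteq> {1..<d}" "word_perm z = y" "length z = ninv d y"
    "set v \<subseteq> {1..<d}" "length z + length v = ninv d (y \<circ> word_perm v)"
  shows "redw d (z @ v)"
  using assms by (auto simp: redw_def word_perm_append)

lemma matsumoto_aux:
  assumes IH0: "\<forall>u v. length u = n \<longrightarrow> redw d u \<longrightarrow> redw d v \<longrightarrow> word_perm u = word_perm v \<longrightarrow> beq d u v"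
    and u: "redw d (u @ [s])" and v: "redw d (v @ [t])" and len: "length u = n"
    and eq: "word_perm (u @ [s]) = word_perm (v @ [t])" and st: "s < t"
  shows "beq d (u @ [s]) (v @ [t])"
proof -
  have IH: "beq d u v" if "length u = n" "redw d u" "redw d v" "word_perm u = word_perm v" for u v
    using IH0 that by blast
  define w where "w = word_perm (u @ [s])"
  have wp: "w permutes {1..d}" using u unfolding w_def by (rule redw_permutes)
  have s: "s \<in> {1..<d}" using u by (auto simp: redw_def)
  have t: "t \<in> {1..<d}" using v by (auto simp: redw_def)
  obtain ru ds wu where ru: "redw d u" and ds: "w (Suc s) < w s" and wu: "word_perm u = w \<circ> sref s"
    using redw_snoc_desc[OF u] w_def by blast
  obtain rv dt wv where rv: "redw d v" and dt: "w (Suc t) < w t" and wv: "word_perm v = w \<circ> sref t"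
    using redw_snoc_desc[OF v] w_def eq by metis
  have nw: "ninv d w = Suc (ninv d (w \<circ> sref s))" using ninv_desc[OF wp s ds] .
  have nwt: "ninv d w = Suc (ninv d (w \<circ> sref t))" using ninv_desc[OF wp t dt] .
  have ws: "w \<circ> sref s permutes {1..d}" using perm_comp_sref[OF wp s] .
  have wt: "w \<circ> sref t permutes {1..d}" using perm_comp_sref[OF wp t] .
  have lu: "length u = ninv d (w \<circ> sref s)" using ru wu by (simp add: redw_def)
  show ?thesis
  proof (cases "Suc s < t")
    case True
    then have c: "s + 2 \<le> t" by simp
    have d1: "(w \<circ> sref s) (Suc t) < (w \<circ> sref s) t"
      using dt True by (auto simp: sref_def transpose_def)
    have n1: "ninv d (w \<circ> sref s) = Suc (ninv d (w \<circ> sref s \<circ> sref t))"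
      using ninv_desc[OF ws t d1] .
    define y where "y = w \<circ> sref s \<circ> sref t"
    have yp: "y permutes {1..d}" unfolding y_def using perm_comp_sref[OF ws t] .
    obtain z where z: "set z \<subseteq> {1..<d}" "word_perm z = y" "length z = ninv d y"
      using exists_reduced[OF yp] by blast
    have comm: "sref s \<circ> sref t = sref t \<circ> sref s" using sref_comm c by blast
    have y2: "y \<circ> sref t = w \<circ> sref s" by (simp add: y_def comp_assoc)
    have y3: "y \<circ> sref s = w \<circ> sref t" by (simp add: y_def comp_assoc comm)
    have r1: "redw d (z @ [t])"
      using z t n1 y2 by (auto simp: redw_def word_perm_append y_def)
    have r2: "redw d (z @ [s])"
      using z s n1 y3 nw nwt by (auto simp: redw_def word_perm_append y_def)
    have b1: "beq d u (z @ [t])"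
      by (rule IH[OF len ru r1]) (simp add: wu word_perm_snoc z y2)
    have lv: "length v = n" using rv wv nw nwt lu len by (simp add: redw_def)
    have b2: "beq d v (z @ [s])"
      by (rule IH[OF lv rv r2]) (simp add: wv word_perm_snoc z y3)
    have b3: "beq d (z @ [t, s]) (z @ [s, t])"
      using beq_comm[of t d s z "[]"] s t c by auto
    have e1: "beq d (u @ [s]) (z @ [t, s])" using beq_snoc[OF b1, of "[s]"] by simp
    have e2: "beq d (v @ [t]) (z @ [s, t])" using beq_snoc[OF b2, of "[t]"] by simp
    show ?thesis by (rule beq_trans[OF e1 beq_trans[OF b3 beq_sym[OF e2]]])
  next
    case False
    then have ts: "t = Suc s" using st by simp
    have d1: "(w \<circ> sref s) (Suc t) < (w \<circ> sref s) t"
      using dt ds ts by (auto simp: sref_def transpose_def)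
    have n1: "ninv d (w \<circ> sref s) = Suc (ninv d (w \<circ> sref s \<circ> sref t))"
      using ninv_desc[OF ws t d1] .
    have ws2: "w \<circ> sref s \<circ> sref t permutes {1..d}" using perm_comp_sref[OF ws t] .
    have d2: "(w \<circ> sref s \<circ> sref t) (Suc s) < (w \<circ> sref s \<circ> sref t) s"
      using dt ds ts by (auto simp: sref_def transpose_def)
    have n2: "ninv d (w \<circ> sref s \<circ> sref t) = Suc (ninv d (w \<circ> sref s \<circ> sref t \<circ> sref s))"
      using ninv_desc[OF ws2 s d2] .
    define y where "y = w \<circ> sref s \<circ> sref t \<circ> sref s"
    have yp: "y permutes {1..d}" unfolding y_def using perm_comp_sref[OF ws2 s] .
    obtain z where z: "set z \<subseteq> {1..<d}" "word_perm z = y" "length z = ninv d y"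
      using exists_reduced[OF yp] by blast
    have br: "sref s \<circ> sref t \<circ> sref s = sref t \<circ> sref s \<circ> sref t" using sref_braid ts by simp
    have y2: "y \<circ> sref s \<circ> sref t = w \<circ> sref s"
    proof -
      have "y \<circ> sref s \<circ> sref t = w \<circ> sref s \<circ> sref t \<circ> (sref s \<circ> sref s) \<circ> sref t"
        by (simp add: y_def comp_assoc)
      also have "\<dots> = w \<circ> sref s" by (simp add: comp_assoc)
      finally show ?thesis .
    qed
    have y3: "y \<circ> sref t \<circ> sref s = w \<circ> sref t"
    proof -
      have "y = w \<circ> (sref s \<circ> sref t \<circ> sref s)" by (simp add: y_def comp_assoc)
      also have "\<dots> = w \<circ> (sref t \<circ> sref s \<circ> sref t)" by (simp add: br)
      finally have "y \<circ> sref t \<circ> sref s = w \<circ> sref t \<circ> sref s \<circ> (sref t \<circ> sref t) \<circ> sref s"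
        by (simp add: comp_assoc)
      also have "\<dots> = w \<circ> sref t" by (simp add: comp_assoc)
      finally show ?thesis .
    qed
    have p1: "word_perm (z @ [s, t]) = w \<circ> sref s"
      unfolding word_perm_append using y2 z(2) by (simp add: comp_assoc)
    have p2: "word_perm (z @ [t, s]) = w \<circ> sref t"
      unfolding word_perm_append using y3 z(2) by (simp add: comp_assoc)
    have lz: "length z + 2 = ninv d (w \<circ> sref s)" using z(3) n1 n2 unfolding y_def by simp
    have r1: "redw d (z @ [s, t])"
      unfolding redw_def p1 using z(1) s t lz by auto
    have r2: "redw d (z @ [t, s])"
      unfolding redw_def p2 using z(1) s t lz nw nwt by auto
    have b1: "beq d u (z @ [s, t])"
      by (rule IH[OF len ru r1]) (simp only: wu p1)
    have lv: "length v = n" using rv wv nw nwt lu len by (simp add: redw_def)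
    have b2: "beq d v (z @ [t, s])"
      by (rule IH[OF lv rv r2]) (simp only: wv p2)
    have b3: "beq d (z @ [s, Suc s, s] @ []) (z @ [Suc s, s, Suc s] @ [])"
      using s t ts by (intro beq_braid) auto
    have e1: "beq d (u @ [s]) (z @ [s, t, s])" using beq_snoc[OF b1, of "[s]"] by simp
    have e2: "beq d (v @ [t]) (z @ [t, s, t])" using beq_snoc[OF b2, of "[t]"] by simp
    have b3': "beq d (z @ [s, t, s]) (z @ [t, s, t])" using b3 ts by simp
    show ?thesis by (rule beq_trans[OF e1 beq_trans[OF b3' beq_sym[OF e2]]])
  qed
qed

lemma matsumoto:
  "redw d u \<Longrightarrow> redw d v \<Longrightarrow> word_perm u = word_perm v \<Longrightarrow> beq d u v"
proof (induction "length u" arbitrary: u v)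
  case 0
  then have "u = []" by simp
  then have "word_perm v = id" using 0 by (metis word_perm_Nil)
  then have "ninv d (word_perm v) = 0" by (metis ninv_id)
  then have "length v = 0" using 0 by (simp add: redw_def)
  then show ?case using \<open>u = []\<close> by (simp add: beq_refl)
next
  case (Suc n)
  obtain u' s where us: "u = u' @ [s]" using Suc(2) by (metis length_Suc_conv_rev)
  have "length v = Suc n" using Suc by (simp add: redw_def)
  then obtain v' t where vt: "v = v' @ [t]" by (metis length_Suc_conv_rev)
  have lu: "length u' = n" using Suc(2) us by simp
  have IH: "beq d u v" if "length u = n" "redw d u" "redw d v" "word_perm u = word_perm v" for u v
    using Suc(1)[of u v] that by simp
  have IH0: "\<forall>u v. length u = n \<longrightarrow> redw d u \<longrightarrow> redw d v \<longrightarrow> word_perm u = word_perm v \<longrightarrow> beq d u v"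
    using IH by blast
  show ?case
  proof (cases "s = t")
    case True
    have a1: "redw d u'" "word_perm u' = word_perm u \<circ> sref s"
      using redw_snoc_desc[OF Suc(3)[unfolded us]] us by auto
    have a2: "redw d v'" "word_perm v' = word_perm v \<circ> sref t"
      using redw_snoc_desc[OF Suc(4)[unfolded vt]] vt by auto
    have "word_perm u' = word_perm u \<circ> sref s" by (rule a1(2))
    also have "\<dots> = word_perm v \<circ> sref t" using Suc(5) True by simp
    also have "\<dots> = word_perm v'" using a2(2) by simp
    finally have "beq d u' v'" using IH[OF lu a1(1) a2(1)] by blast
    then have "beq d (u' @ [s]) (v' @ [s])" by (rule beq_snoc)
    then show ?thesis by (simp only: us vt True)
  next
    case False
    show ?thesis
    proof (cases "s < t")
      case True
      have "beq d (u' @ [s]) (v' @ [t])"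
        using matsumoto_aux[OF IH0 Suc(3)[unfolded us] Suc(4)[unfolded vt] lu Suc(5)[unfolded us vt] True] .
      then show ?thesis by (simp only: us vt)
    next
      case False
      then have ts: "t < s" using \<open>s \<noteq> t\<close> by simp
      have lv: "length v' = n" using \<open>length v = Suc n\<close> vt by simp
      have "beq d (v' @ [t]) (u' @ [s])"
        using matsumoto_aux[OF IH0 Suc(4)[unfolded vt] Suc(3)[unfolded us] lv Suc(5)[unfolded us vt, symmetric] ts] .
      then show ?thesis unfolding us vt by (rule beq_sym)
    qed
  qed
qed

lemma nonreduced_split:
  "set u \<subseteq> {1..<d} \<Longrightarrow> \<not> redw d u \<Longrightarrow>
   \<exists>u1 u2 i. i \<in> {1..<d} \<and> set u1 \<subseteq> {1..<d} \<and> set u2 \<subseteq> {1..<d} \<and>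
      length u1 + length u2 + 2 = length u \<and> beq d u (u1 @ [i, i] @ u2)"
proof (induction u rule: rev_induct)
  case Nil then show ?case by (simp add: redw_def)
next
  case (snoc s u)
  show ?case
  proof (cases "redw d u")
    case False
    then obtain u1 u2 i where h: "i \<in> {1..<d}" "set u1 \<subseteq> {1..<d}" "set u2 \<subseteq> {1..<d}"
      "length u1 + length u2 + 2 = length u" "beq d u (u1 @ [i, i] @ u2)"
      using snoc by auto
    have "beq d (u @ [s]) (u1 @ [i, i] @ (u2 @ [s]))" using beq_snoc[OF h(5), of "[s]"] by simp
    then show ?thesis using snoc.prems h
      by (intro exI[of _ u1] exI[of _ "u2 @ [s]"] exI[of _ i]) auto
  next
    case True
    let ?w = "word_perm u"
    have s: "s \<in> {1..<d}" using snoc by auto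
    have wp: "?w permutes {1..d}" using True by (rule redw_permutes)
    have lu: "length u = ninv d ?w" using True by (simp add: redw_def)
    have "ninv d (?w \<circ> sref s) \<noteq> Suc (ninv d ?w)"
      using snoc.prems(2) snoc.prems(1) lu by (auto simp: redw_def word_perm_snoc)
    then have "\<not> ?w s < ?w (Suc s)" using ninv_asc[OF wp s] by blast
    moreover have "?w s \<noteq> ?w (Suc s)" using permutes_neq_apply[OF wp] by auto
    ultimately have ds: "?w (Suc s) < ?w s" by auto
    have n1: "ninv d ?w = Suc (ninv d (?w \<circ> sref s))" using ninv_desc[OF wp s ds] .
    have yp: "?w \<circ> sref s permutes {1..d}" using perm_comp_sref[OF wp s] .
    obtain z where z: "set z \<subseteq> {1..<d}" "word_perm z = ?w \<circ> sref s" "length z = ninv d (?w \<circ> sref s)"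
      using exists_reduced[OF yp] by blast
    have wz: "word_perm (z @ [s]) = ?w" using z(2) by (simp add: word_perm_snoc comp_assoc)
    have "redw d (z @ [s])" using z s n1 wz by (auto simp: redw_def)
    then have "beq d u (z @ [s])" using matsumoto[OF True] wz by metis
    then have "beq d (u @ [s]) (z @ [s, s] @ [])" using beq_snoc by fastforce
    then show ?thesis using z s lu n1 by (intro exI[of _ z] exI[of _ "[]"] exI[of _ s]) auto
  qed
qed

definition cw :: "nat \<Rightarrow> (nat \<Rightarrow> nat) \<Rightarrow> nat list" where
  "cw d w = (SOME ws. reduced_word d w ws)"

lemma cw_props:
  assumes "w permutes {1..d}"
  shows "set (cw d w) \<subseteq> {1..<d} \<and> word_perm (cw d w) = w \<and> length (cw d w) = ninv d w"
proof -
  obtain u where u: "set u \<subseteq> {1..<d}" "word_perm u = w" "length u = ninv d w"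
    using exists_reduced[OF assms] by blast
  have "reduced_word d w u" using u ninv_le_length by (auto simp: reduced_word_def) metis
  then have r: "reduced_word d w (cw d w)" unfolding cw_def by (rule someI)
  then have "length (cw d w) \<le> length u" using u by (auto simp: reduced_word_def)
  moreover have "ninv d w \<le> length (cw d w)" using r ninv_le_length by (auto simp: reduced_word_def) metis
  ultimately show ?thesis using r u by (auto simp: reduced_word_def)
qed

lemma Hw_cw: "Hw H d w = prod_list (map H (cw d w))"
  by (simp add: Hw_def cw_def)

lemma cw_redw: "w permutes {1..d} \<Longrightarrow> redw d (cw d w)"
  using cw_props by (auto simp: redw_def)



section \<open>Linear algebra on finitely supported functions\<close>

lemma lookup_pscale [simp]: "Poly_Mapping.lookup (pscale c x) a = c * Poly_Mapping.lookup x a"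
  by (simp add: pscale_def Poly_Mapping.map.rep_eq when_def)

lemma pscale_add: "pscale c (x + y) = pscale c x + pscale c y"
  by (rule poly_mapping_eqI) (simp add: lookup_add algebra_simps)

lemma pscale_add_left: "pscale (c + c') x = pscale c x + pscale c' x"
  by (rule poly_mapping_eqI) (simp add: lookup_add algebra_simps)

lemma pscale_pscale [simp]: "pscale c (pscale c' x) = pscale (c * c') x"
  by (rule poly_mapping_eqI) (simp add: algebra_simps)

lemma pscale_one [simp]: "pscale 1 x = x"
  by (rule poly_mapping_eqI) simp

lemma pscale_zero [simp]: "pscale c 0 = 0"
  by (rule poly_mapping_eqI) simp

lemma pscale_zero_left [simp]: "pscale 0 x = 0"
  by (rule poly_mapping_eqI) simp

lemma pscale_single [simp]: "pscale c (Poly_Mapping.single a v) = Poly_Mapping.single a (c * v)"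
  by (rule poly_mapping_eqI) (simp add: lookup_single when_def)

lemma pscale_sum: "pscale c (sum f A) = (\<Sum>i\<in>A. pscale c (f i))"
  by (rule poly_mapping_eqI) (simp add: lookup_sum sum_distrib_left)

lemma pscale_minus_one: "pscale (-1) x = - x"
  by (rule poly_mapping_eqI) simp

lemma keys_pscale: "Poly_Mapping.keys (pscale c x) \<subseteq> Poly_Mapping.keys x"
  by (auto simp: in_keys_iff)

lemma lin_ext_superset:
  assumes "finite A" "Poly_Mapping.keys x \<subseteq> A"
  shows "lin_ext f x = (\<Sum>a\<in>A. pscale (Poly_Mapping.lookup x a) (f a))"
  unfolding lin_ext_def
  by (rule sum.mono_neutral_left) (use assms in \<open>auto simp: in_keys_iff\<close>)

lemma lin_ext_add: "lin_ext f (x + y) = lin_ext f x + lin_ext f y"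
proof -
  let ?A = "Poly_Mapping.keys x \<union> Poly_Mapping.keys y"
  have "lin_ext f (x + y) = (\<Sum>a\<in>?A. pscale (Poly_Mapping.lookup (x + y) a) (f a))"
    by (rule lin_ext_superset) (auto dest: subsetD[OF keys_add])
  also have "\<dots> = (\<Sum>a\<in>?A. pscale (Poly_Mapping.lookup x a) (f a)) + (\<Sum>a\<in>?A. pscale (Poly_Mapping.lookup y a) (f a))"
    by (simp add: lookup_add pscale_add_left sum.distrib)
  also have "\<dots> = lin_ext f x + lin_ext f y"
    by (simp add: lin_ext_superset[symmetric])
  finally show ?thesis .
qed

lemma lin_ext_pscale: "lin_ext f (pscale c x) = pscale c (lin_ext f x)"
proof -
  have "lin_ext f (pscale c x) = (\<Sum>a\<in>Poly_Mapping.keys x. pscale (Poly_Mapping.lookup (pscale c x) a) (f a))"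
    by (rule lin_ext_superset) (auto simp: in_keys_iff)
  then show ?thesis by (simp add: lin_ext_def pscale_sum)
qed

lemma lin_ext_single [simp]: "lin_ext f (Poly_Mapping.single a c) = pscale c (f a)"
proof -
  have "lin_ext f (Poly_Mapping.single a c) = (\<Sum>b\<in>{a}. pscale (Poly_Mapping.lookup (Poly_Mapping.single a c) b) (f b))"
    by (rule lin_ext_superset) auto
  then show ?thesis by simp
qed

lemma lin_ext_zero [simp]: "lin_ext f 0 = 0"
  by (simp add: lin_ext_def)

lemma lin_ext_ebasis [simp]: "lin_ext f (ebasis a) = f a"
  by (simp add: ebasis_def)

lemma lin_ext_fadd: "lin_ext (\<lambda>a. f a + g a) x = lin_ext f x + lin_ext g x"
  by (simp add: lin_ext_def pscale_add sum.distrib)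

lemma lin_ext_fpscale: "lin_ext (\<lambda>a. pscale c (f a)) x = pscale c (lin_ext f x)"
  by (simp add: lin_ext_def pscale_sum mult.commute)

lemma lin_ext_fzero [simp]: "lin_ext (\<lambda>a. 0) x = 0"
  by (simp add: lin_ext_def)

lemma lin_ext_cong: "(\<And>a. a \<in> Poly_Mapping.keys x \<Longrightarrow> f a = g a) \<Longrightarrow> lin_ext f x = lin_ext g x"
  by (simp add: lin_ext_def)

lemma lin_ext_ebasis_id: "lin_ext ebasis x = x"
proof (rule poly_mapping_eqI)
  fix k
  have "Poly_Mapping.lookup (lin_ext ebasis x) k = (\<Sum>a\<in>Poly_Mapping.keys x. Poly_Mapping.lookup x a * (if a = k then 1 else 0))"
    unfolding lin_ext_def lookup_sum ebasis_def by (simp only: lookup_pscale lookup_single when_def)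
  also have "\<dots> = (\<Sum>a\<in>Poly_Mapping.keys x. if a = k then Poly_Mapping.lookup x a else 0)"
    by (rule sum.cong) auto
  also have "\<dots> = (if k \<in> Poly_Mapping.keys x then Poly_Mapping.lookup x k else 0)"
    by (rule sum.delta) simp
  also have "\<dots> = Poly_Mapping.lookup x k" by (simp add: in_keys_iff)
  finally show "Poly_Mapping.lookup (lin_ext ebasis x) k = Poly_Mapping.lookup x k" .
qed

abbreviation glin :: "(('a \<Rightarrow>\<^sub>0 'k::comm_ring_1) \<Rightarrow> ('b \<Rightarrow>\<^sub>0 'k)) \<Rightarrow> bool" where
  "glin g \<equiv> lin_on UNIV g"

lemma glinI: "(\<And>x y. g (x + y) = g x + g y) \<Longrightarrow> (\<And>c x. g (pscale c x) = pscale c (g x)) \<Longrightarrow> glin g"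
  by (simp add: lin_on_def)

lemma glin_add: "glin g \<Longrightarrow> g (x + y) = g x + g y"
  by (simp add: lin_on_def)

lemma glin_pscale: "glin g \<Longrightarrow> g (pscale c x) = pscale c (g x)"
  by (simp add: lin_on_def)

lemma glin_zero: "glin g \<Longrightarrow> g 0 = 0"
  using glin_pscale[of g 0 0] by simp

lemma glin_sum: "glin g \<Longrightarrow> g (sum f A) = (\<Sum>i\<in>A. g (f i))"
proof (induction A rule: infinite_finite_induct)
  case (infinite A) then show ?case by (simp add: glin_zero)
next
  case empty then show ?case by (simp add: glin_zero)
next
  case (insert a A) then show ?case by (simp add: glin_add)
qed

lemma glin_lin_ext: "glin g \<Longrightarrow> g (lin_ext f x) = lin_ext (\<lambda>a. g (f a)) x"
  by (simp add: lin_ext_def glin_sum glin_pscale)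

lemma glin_expand: "glin g \<Longrightarrow> g x = lin_ext (\<lambda>a. g (ebasis a)) x"
  using glin_lin_ext[of g ebasis x] by (simp add: lin_ext_ebasis_id)

lemma lin_eq_keys:
  assumes "glin g" "glin h" "\<And>a. a \<in> Poly_Mapping.keys x \<Longrightarrow> g (ebasis a) = h (ebasis a)"
  shows "g x = h x"
  using glin_expand[OF assms(1), of x] glin_expand[OF assms(2), of x] lin_ext_cong[of x] assms(3)
  by metis

lemma glin_lin_ext_fun: "glin (lin_ext f)"
  by (rule glinI) (simp_all add: lin_ext_add lin_ext_pscale)

lemma glin_comp: "glin g \<Longrightarrow> glin h \<Longrightarrow> glin (\<lambda>x. g (h x))"
  by (rule glinI) (simp_all add: glin_add glin_pscale)

lemma glin_plus: "glin g \<Longrightarrow> glin h \<Longrightarrow> glin (\<lambda>x. g x + h x)"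
  by (rule glinI) (simp_all add: glin_add glin_pscale pscale_add)

lemma glin_id: "glin (\<lambda>x. x)"
  by (rule glinI) simp_all

lemma glin_param: "(\<And>a. glin (\<lambda>y. F a y)) \<Longrightarrow> glin (\<lambda>y. lin_ext (\<lambda>a. F a y) x)"
  by (rule glinI) (simp_all add: glin_add glin_pscale lin_ext_fadd lin_ext_fpscale)

lemma tens_space_iff: "x \<in> tens_space n \<longleftrightarrow> (\<forall>a\<in>Poly_Mapping.keys x. length a = n)"
  by (simp add: tens_space_def)

lemma ts_zero [simp]: "0 \<in> tens_space n"
  by (simp add: tens_space_def)

lemma ts_add: "x \<in> tens_space n \<Longrightarrow> y \<in> tens_space n \<Longrightarrow> x + y \<in> tens_space n"
  by (auto simp: tens_space_def dest: subsetD[OF keys_add])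

lemma ts_pscale: "x \<in> tens_space n \<Longrightarrow> pscale c x \<in> tens_space n"
  by (auto simp: tens_space_def dest: subsetD[OF keys_pscale])

lemma ts_sum: "(\<And>i. i \<in> A \<Longrightarrow> f i \<in> tens_space n) \<Longrightarrow> sum f A \<in> tens_space n"
  by (induction A rule: infinite_finite_induct) (auto intro: ts_add)

lemma ts_single: "length a = n \<Longrightarrow> Poly_Mapping.single a c \<in> tens_space n"
  by (simp add: tens_space_def)

lemma ts_ebasis: "length a = n \<Longrightarrow> ebasis a \<in> tens_space n"
  by (simp add: ebasis_def ts_single)

lemma ts_lin_ext: "(\<And>a. a \<in> Poly_Mapping.keys x \<Longrightarrow> f a \<in> tens_space n) \<Longrightarrow> lin_ext f x \<in> tens_space n"
  unfolding lin_ext_def by (intro ts_sum ts_pscale) auto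

lemma ts_neg: "x \<in> tens_space n \<Longrightarrow> - x \<in> tens_space n"
  by (simp add: tens_space_def)

lemma ts_diff:
  assumes "x \<in> tens_space n" "y \<in> tens_space n" shows "x - y \<in> tens_space n"
  unfolding tens_space_def
proof (intro CollectI ballI)
  fix a assume "a \<in> Poly_Mapping.keys (x - y)"
  then show "length a = n" using assms
    by (cases "Poly_Mapping.lookup x a = 0") (auto simp: tens_space_def in_keys_iff lookup_minus)
qed

lemma lin_on_expand:
  assumes "lin_on (tens_space n) g" "x \<in> tens_space n"
  shows "g x = lin_ext (\<lambda>a. g (ebasis a)) x"
proof -
  have add: "g (u + v) = g u + g v" if "u \<in> tens_space n" "v \<in> tens_space n" for u v
    using assms(1) that by (simp add: lin_on_def)
  have sc: "g (pscale c u) = pscale c (g u)" if "u \<in> tens_space n" for c u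
    using assms(1) that by (simp add: lin_on_def)
  have z: "g 0 = 0" using sc[of 0 0] by simp
  have sm: "g (sum f A) = (\<Sum>i\<in>A. g (f i))" if "\<And>i. i \<in> A \<Longrightarrow> f i \<in> tens_space n" for f A
    using that
  proof (induction A rule: infinite_finite_induct)
    case (infinite A) then show ?case by (simp add: z)
  next
    case empty then show ?case by (simp add: z)
  next
    case (insert a A) then show ?case by (simp add: add ts_sum)
  qed
  have mem: "ebasis a \<in> tens_space n" if "a \<in> Poly_Mapping.keys x" for a
    using assms(2) that by (intro ts_ebasis) (simp add: tens_space_def)
  have "g (lin_ext ebasis x) = (\<Sum>a\<in>Poly_Mapping.keys x. g (pscale (Poly_Mapping.lookup x a) (ebasis a)))"
    unfolding lin_ext_def by (rule sm) (rule ts_pscale[OF mem])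
  also have "\<dots> = (\<Sum>a\<in>Poly_Mapping.keys x. pscale (Poly_Mapping.lookup x a) (g (ebasis a)))"
    by (rule sum.cong[OF refl]) (simp add: sc mem)
  also have "\<dots> = lin_ext (\<lambda>a. g (ebasis a)) x" by (simp add: lin_ext_def)
  finally show ?thesis by (simp add: lin_ext_ebasis_id)
qed

lemma tprod_lin_ext: "tprod x y = lin_ext (\<lambda>a. lin_ext (\<lambda>b. ebasis (a @ b)) y) x"
  by (simp add: tprod_def lin_ext_def pscale_sum ebasis_def)

lemma glin_tprod1: "glin (\<lambda>x. tprod x y)"
  unfolding tprod_lin_ext by (rule glin_lin_ext_fun)

lemma glin_tprod2: "glin (\<lambda>y. tprod x y)"
  unfolding tprod_lin_ext by (rule glin_param) (rule glin_lin_ext_fun)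

lemma tprod_ebasis [simp]: "tprod (ebasis a) (ebasis b) = ebasis (a @ b)"
  by (simp add: tprod_lin_ext)

lemma ts_tprod: "x \<in> tens_space m \<Longrightarrow> y \<in> tens_space n \<Longrightarrow> tprod x y \<in> tens_space (m + n)"
  unfolding tprod_lin_ext
  by (intro ts_lin_ext ts_ebasis) (auto simp: tens_space_def)

lemma tprod_zero1 [simp]: "tprod 0 y = 0" and tprod_zero2 [simp]: "tprod x 0 = 0"
  by (simp_all add: tprod_def)

lemma tprod_assoc: "tprod (tprod x y) z = tprod x (tprod y z)"
proof -
  have "tprod (tprod x y) z = tprod x (tprod y z)" for x
  proof (rule lin_eq_keys[of "\<lambda>x. tprod (tprod x y) z" "\<lambda>x. tprod x (tprod y z)"])
    show "glin (\<lambda>x. tprod (tprod x y) z)" by (intro glin_comp[OF glin_tprod1 glin_tprod1])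
    show "glin (\<lambda>x. tprod x (tprod y z))" by (rule glin_tprod1)
    fix a
    show "tprod (tprod (ebasis a) y) z = tprod (ebasis a) (tprod y z)"
    proof (rule lin_eq_keys[of "\<lambda>y. tprod (tprod (ebasis a) y) z" "\<lambda>y. tprod (ebasis a) (tprod y z)"])
      show "glin (\<lambda>y. tprod (tprod (ebasis a) y) z)" by (intro glin_comp[OF glin_tprod1 glin_tprod2])
      show "glin (\<lambda>y. tprod (ebasis a) (tprod y z))" by (intro glin_comp[OF glin_tprod2 glin_tprod1])
      fix b
      show "tprod (tprod (ebasis a) (ebasis b)) z = tprod (ebasis a) (tprod (ebasis b) z)"
      proof (rule lin_eq_keys[of "\<lambda>z. tprod (tprod (ebasis a) (ebasis b)) z" "\<lambda>z. tprod (ebasis a) (tprod (ebasis b) z)"])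
        show "glin (\<lambda>z. tprod (tprod (ebasis a) (ebasis b)) z)" by (rule glin_tprod2)
        show "glin (\<lambda>z. tprod (ebasis a) (tprod (ebasis b) z))" by (intro glin_comp[OF glin_tprod2 glin_tprod2])
      qed simp
    qed
  qed
  then show ?thesis .
qed

lemma tprod_unit_left [simp]: "tprod (ebasis []) y = y"
  by (rule lin_eq_keys[OF glin_tprod2 glin_id]) simp

lemma tprod_unit_right [simp]: "tprod x (ebasis []) = x"
  by (rule lin_eq_keys[OF glin_tprod1 glin_id]) simp

lemma lookup_tprod:
  assumes "x \<in> tens_space m"
  shows "Poly_Mapping.lookup (tprod x y) k = (if m \<le> length k then Poly_Mapping.lookup x (take m k) * Poly_Mapping.lookup y (drop m k) else 0)"
proof -
  have "Poly_Mapping.lookup (tprod x y) k = (\<Sum>a\<in>Poly_Mapping.keys x. \<Sum>b\<in>Poly_Mapping.keys y. if a @ b = k then Poly_Mapping.lookup x a * Poly_Mapping.lookup y b else 0)"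
    by (simp add: tprod_def lookup_sum lookup_single when_def eq_commute)
  also have "\<dots> = (\<Sum>a\<in>Poly_Mapping.keys x. \<Sum>b\<in>Poly_Mapping.keys y. if m \<le> length k \<and> a = take m k \<and> b = drop m k then Poly_Mapping.lookup x a * Poly_Mapping.lookup y b else 0)"
  proof (intro sum.cong refl)
    fix a b assume "a \<in> Poly_Mapping.keys x"
    then have "length a = m" using assms by (simp add: tens_space_def)
    then have "a @ b = k \<longleftrightarrow> m \<le> length k \<and> a = take m k \<and> b = drop m k"
      using append_eq_conv_conj[of a b k] by (cases "m \<le> length k") auto
    then show "(if a @ b = k then Poly_Mapping.lookup x a * Poly_Mapping.lookup y b else 0) =
      (if m \<le> length k \<and> a = take m k \<and> b = drop m k then Poly_Mapping.lookup x a * Poly_Mapping.lookup y b else 0)" by simp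
  qed
  also have "\<dots> = (if m \<le> length k then Poly_Mapping.lookup x (take m k) * Poly_Mapping.lookup y (drop m k) else 0)"
  proof (cases "m \<le> length k")
    case True
    have "(\<Sum>a\<in>Poly_Mapping.keys x. \<Sum>b\<in>Poly_Mapping.keys y. if m \<le> length k \<and> a = take m k \<and> b = drop m k then Poly_Mapping.lookup x a * Poly_Mapping.lookup y b else 0)
      = (\<Sum>a\<in>Poly_Mapping.keys x. if a = take m k then (\<Sum>b\<in>Poly_Mapping.keys y. if b = drop m k then Poly_Mapping.lookup x a * Poly_Mapping.lookup y b else 0) else 0)"
      using True by (intro sum.cong refl) auto
    also have "\<dots> = (\<Sum>a\<in>Poly_Mapping.keys x. if a = take m k then Poly_Mapping.lookup x a * Poly_Mapping.lookup y (drop m k) else 0)"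
      by (intro sum.cong refl) (auto simp: in_keys_iff)
    also have "\<dots> = Poly_Mapping.lookup x (take m k) * Poly_Mapping.lookup y (drop m k)"
      by (auto simp: in_keys_iff)
    finally show ?thesis using True by simp
  qed simp
  finally show ?thesis .
qed

lemma lift1_lin_ext: "lift1 b = lin_ext (\<lambda>j. ebasis [j]) b"
  by (simp add: lift1_def lin_ext_def ebasis_def)

lemma glin_lift1: "glin lift1"
  unfolding lift1_lin_ext[abs_def] by (rule glin_lin_ext_fun)

lemma lift1_ebasis [simp]: "lift1 (ebasis j) = ebasis [j]"
  by (simp add: lift1_lin_ext)

lemma ts_lift1: "lift1 b \<in> tens_space 1"
  unfolding lift1_lin_ext by (intro ts_lin_ext ts_ebasis) simp

lemma pure_Nil [simp]: "pure [] = ebasis []"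
  by (simp add: pure_def ebasis_def)

lemma pure_Cons: "pure (b # bs) = tprod (lift1 b) (pure bs)"
  by (simp add: pure_def)

lemma ts_pure: "pure bs \<in> tens_space (length bs)"
proof (induction bs)
  case Nil then show ?case by (simp add: ts_ebasis)
next
  case (Cons b bs)
  then show ?case using ts_tprod[OF ts_lift1 Cons.IH] by (simp add: pure_Cons)
qed

lemma pure_append: "pure (xs @ ys) = tprod (pure xs) (pure ys)"
  by (induction xs) (simp_all add: pure_Cons tprod_assoc)

lemma pure_single: "pure [b] = lift1 b"
  by (simp add: pure_Cons)

lemma pure_ebasis: "pure (map ebasis a) = ebasis a"
proof (induction a)
  case Nil then show ?case by simp
next
  case (Cons j a)
  then show ?case by (simp add: pure_Cons)
qed

lemma glin_starT: "glin (starT f)"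
  unfolding starT_def[abs_def] by (rule glin_lin_ext_fun)

lemma starT_ebasis: "starT f (ebasis a) = pure (map (\<lambda>j. f (ebasis j)) a)"
  by (simp add: starT_def)

lemma ts_starT: "x \<in> tens_space n \<Longrightarrow> starT f x \<in> tens_space n"
  unfolding starT_def
  by (intro ts_lin_ext) (metis length_map tens_space_iff ts_pure)

lemma starT_tprod: "starT f (tprod x y) = tprod (starT f x) (starT f y)"
proof (rule lin_eq_keys[of "\<lambda>x. starT f (tprod x y)" "\<lambda>x. tprod (starT f x) (starT f y)"])
  show "glin (\<lambda>x. starT f (tprod x y))" by (rule glin_comp[OF glin_starT glin_tprod1])
  show "glin (\<lambda>x. tprod (starT f x) (starT f y))" by (rule glin_comp[OF glin_tprod1 glin_starT])
  fix a
  show "starT f (tprod (ebasis a) y) = tprod (starT f (ebasis a)) (starT f y)"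
  proof (rule lin_eq_keys[of "\<lambda>y. starT f (tprod (ebasis a) y)" "\<lambda>y. tprod (starT f (ebasis a)) (starT f y)"])
    show "glin (\<lambda>y. starT f (tprod (ebasis a) y))" by (rule glin_comp[OF glin_starT glin_tprod2])
    show "glin (\<lambda>y. tprod (starT f (ebasis a)) (starT f y))" by (rule glin_comp[OF glin_tprod2 glin_starT])
  qed (simp add: starT_ebasis pure_append)
qed

lemma starT_lift1: "glin f \<Longrightarrow> starT f (lift1 b) = lift1 (f b)"
  by (rule lin_eq_keys[OF glin_comp[OF glin_starT glin_lift1] glin_comp[OF glin_lift1]])
    (simp_all add: starT_ebasis pure_single)

lemma starT_pure: "glin f \<Longrightarrow> starT f (pure bs) = pure (map f bs)"
proof (induction bs)
  case Nil then show ?case by (simp add: starT_ebasis)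
next
  case (Cons b bs)
  then show ?case by (simp add: pure_Cons starT_tprod starT_lift1)
qed

lemma starT_comp: "glin f \<Longrightarrow> starT f (starT g x) = starT (\<lambda>y. f (g y)) x"
  by (rule lin_eq_keys[OF glin_comp[OF glin_starT glin_starT] glin_starT])
    (simp add: starT_ebasis starT_pure comp_def)

lemma starT_id: "starT (\<lambda>y. y) x = x"
  by (rule lin_eq_keys[OF glin_starT glin_id]) (simp add: starT_ebasis pure_ebasis)



definition Mb :: "(('j \<Rightarrow>\<^sub>0 'k) \<Rightarrow> ('j \<Rightarrow>\<^sub>0 'k) \<Rightarrow> ('j \<Rightarrow>\<^sub>0 'k::comm_ring_1)) \<Rightarrow> 'j list \<Rightarrow> 'j list \<Rightarrow> ('j list \<Rightarrow>\<^sub>0 'k)" where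
  "Mb mulB a b = (if length a = length b then pure (map2 (\<lambda>i j. mulB (ebasis i) (ebasis j)) a b) else 0)"

lemma mulT_lin_ext: "mulT mulB x y = lin_ext (\<lambda>a. lin_ext (\<lambda>b. Mb mulB a b) y) x"
  by (simp add: mulT_def lin_ext_def pscale_sum Mb_def)

lemma glin_mulT1: "glin (\<lambda>x. mulT mulB x y)"
  unfolding mulT_lin_ext by (rule glin_lin_ext_fun)

lemma glin_mulT2: "glin (\<lambda>y. mulT mulB x y)"
  unfolding mulT_lin_ext by (rule glin_param) (rule glin_lin_ext_fun)

lemma mulT_ebasis: "mulT mulB (ebasis a) (ebasis b) = Mb mulB a b"
  by (simp add: mulT_lin_ext)

lemma ts_Mb: "length a = n \<Longrightarrow> length b = n \<Longrightarrow> Mb mulB a b \<in> tens_space n"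
  unfolding Mb_def using ts_pure[of "map2 (\<lambda>i j. mulB (ebasis i) (ebasis j)) a b"] by simp

lemma ts_mulT: "x \<in> tens_space n \<Longrightarrow> y \<in> tens_space n \<Longrightarrow> mulT mulB x y \<in> tens_space n"
  unfolding mulT_lin_ext
  by (intro ts_lin_ext ts_Mb) (auto simp: tens_space_def)

lemma glin_mulB1: "K_algebra_B mulB oneB \<Longrightarrow> glin (\<lambda>x. mulB x y)"
  by (rule glinI) (simp_all add: K_algebra_B_def)

lemma glin_mulB2: "K_algebra_B mulB oneB \<Longrightarrow> glin (\<lambda>y. mulB x y)"
  by (rule glinI) (simp_all add: K_algebra_B_def)

lemma mulT_tprod_lift:
  assumes B: "K_algebra_B mulB oneB" and P: "P \<in> tens_space n" and Q: "Q \<in> tens_space n"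
  shows "mulT mulB (tprod (lift1 x) P) (tprod (lift1 y) Q) = tprod (lift1 (mulB x y)) (mulT mulB P Q)"
proof (rule lin_eq_keys[of "\<lambda>x. mulT mulB (tprod (lift1 x) P) (tprod (lift1 y) Q)"
                          "\<lambda>x. tprod (lift1 (mulB x y)) (mulT mulB P Q)"])
  show "glin (\<lambda>x. mulT mulB (tprod (lift1 x) P) (tprod (lift1 y) Q))"
    by (intro glin_comp[OF glin_mulT1 glin_comp[OF glin_tprod1 glin_lift1]])
  show "glin (\<lambda>x. tprod (lift1 (mulB x y)) (mulT mulB P Q))"
    by (intro glin_comp[OF glin_tprod1 glin_comp[OF glin_lift1 glin_mulB1[OF B]]])
  fix i
  show "mulT mulB (tprod (lift1 (ebasis i)) P) (tprod (lift1 y) Q) = tprod (lift1 (mulB (ebasis i) y)) (mulT mulB P Q)"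
  proof (rule lin_eq_keys[of "\<lambda>y. mulT mulB (tprod (lift1 (ebasis i)) P) (tprod (lift1 y) Q)"
                          "\<lambda>y. tprod (lift1 (mulB (ebasis i) y)) (mulT mulB P Q)"])
    show "glin (\<lambda>y. mulT mulB (tprod (lift1 (ebasis i)) P) (tprod (lift1 y) Q))"
      by (intro glin_comp[OF glin_mulT2 glin_comp[OF glin_tprod1 glin_lift1]])
    show "glin (\<lambda>y. tprod (lift1 (mulB (ebasis i) y)) (mulT mulB P Q))"
      by (intro glin_comp[OF glin_tprod1 glin_comp[OF glin_lift1 glin_mulB2[OF B]]])
    fix j
    show "mulT mulB (tprod (lift1 (ebasis i)) P) (tprod (lift1 (ebasis j)) Q) =
          tprod (lift1 (mulB (ebasis i) (ebasis j))) (mulT mulB P Q)"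
    proof (rule lin_eq_keys[of "\<lambda>P. mulT mulB (tprod (lift1 (ebasis i)) P) (tprod (lift1 (ebasis j)) Q)"
                          "\<lambda>P. tprod (lift1 (mulB (ebasis i) (ebasis j))) (mulT mulB P Q)"])
      show "glin (\<lambda>P. mulT mulB (tprod (lift1 (ebasis i)) P) (tprod (lift1 (ebasis j)) Q))"
        by (intro glin_comp[OF glin_mulT1 glin_tprod2])
      show "glin (\<lambda>P. tprod (lift1 (mulB (ebasis i) (ebasis j))) (mulT mulB P Q))"
        by (intro glin_comp[OF glin_tprod2 glin_mulT1])
      fix a assume a: "a \<in> Poly_Mapping.keys P"
      show "mulT mulB (tprod (lift1 (ebasis i)) (ebasis a)) (tprod (lift1 (ebasis j)) Q) =
          tprod (lift1 (mulB (ebasis i) (ebasis j))) (mulT mulB (ebasis a) Q)"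
      proof (rule lin_eq_keys[of "\<lambda>Q. mulT mulB (tprod (lift1 (ebasis i)) (ebasis a)) (tprod (lift1 (ebasis j)) Q)"
                          "\<lambda>Q. tprod (lift1 (mulB (ebasis i) (ebasis j))) (mulT mulB (ebasis a) Q)"])
        show "glin (\<lambda>Q. mulT mulB (tprod (lift1 (ebasis i)) (ebasis a)) (tprod (lift1 (ebasis j)) Q))"
          by (intro glin_comp[OF glin_mulT2 glin_tprod2])
        show "glin (\<lambda>Q. tprod (lift1 (mulB (ebasis i) (ebasis j))) (mulT mulB (ebasis a) Q))"
          by (intro glin_comp[OF glin_tprod2 glin_mulT2])
        fix b assume b: "b \<in> Poly_Mapping.keys Q"
        have la: "length a = n" using a P by (simp add: tens_space_def)
        have lb: "length b = n" using b Q by (simp add: tens_space_def)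
        show "mulT mulB (tprod (lift1 (ebasis i)) (ebasis a)) (tprod (lift1 (ebasis j)) (ebasis b)) =
          tprod (lift1 (mulB (ebasis i) (ebasis j))) (mulT mulB (ebasis a) (ebasis b))"
          using la lb by (simp add: mulT_ebasis Mb_def pure_Cons)
      qed
    qed
  qed
qed

lemma mulT_pure:
  assumes B: "K_algebra_B mulB oneB"
  shows "length xs = length ys \<Longrightarrow> mulT mulB (pure xs) (pure ys) = pure (map2 mulB xs ys)"
proof (induction xs ys rule: list_induct2)
  case Nil then show ?case by (simp add: mulT_ebasis Mb_def)
next
  case (Cons x xs y ys)
  have "pure xs \<in> tens_space (length xs)" "pure ys \<in> tens_space (length xs)"
    using ts_pure[of xs] ts_pure[of ys] Cons.hyps by auto
  then show ?case using Cons.IH by (simp add: pure_Cons mulT_tprod_lift[OF B])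
qed

lemma map_star_map2:
  assumes "\<And>u v. s (m u v) = m (s v) (s u)"
  shows "length a = length b \<Longrightarrow> map s (map2 (\<lambda>i j. m (g i) (g j)) a b) = map2 m (map (\<lambda>j. s (g j)) b) (map (\<lambda>j. s (g j)) a)"
  by (induction a b rule: list_induct2) (simp_all add: assms)

lemma starT_mulT:
  assumes B: "K_algebra_B mulB oneB" and st: "anti_automorphism_B mulB oneB starB"
    and x: "x \<in> tens_space n" and y: "y \<in> tens_space n"
  shows "starT starB (mulT mulB x y) = mulT mulB (starT starB y) (starT starB x)"
proof -
  have gs: "glin starB" using st by (simp add: anti_automorphism_B_def)
  have sm: "\<And>u v. starB (mulB u v) = mulB (starB v) (starB u)" using st by (simp add: anti_automorphism_B_def)
  show ?thesis
  proof (rule lin_eq_keys[of "\<lambda>x. starT starB (mulT mulB x y)" "\<lambda>x. mulT mulB (starT starB y) (starT starB x)"])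
    show "glin (\<lambda>x. starT starB (mulT mulB x y))" by (rule glin_comp[OF glin_starT glin_mulT1])
    show "glin (\<lambda>x. mulT mulB (starT starB y) (starT starB x))" by (rule glin_comp[OF glin_mulT2 glin_starT])
    fix a assume a: "a \<in> Poly_Mapping.keys x"
    show "starT starB (mulT mulB (ebasis a) y) = mulT mulB (starT starB y) (starT starB (ebasis a))"
    proof (rule lin_eq_keys[of "\<lambda>y. starT starB (mulT mulB (ebasis a) y)" "\<lambda>y. mulT mulB (starT starB y) (starT starB (ebasis a))"])
      show "glin (\<lambda>y. starT starB (mulT mulB (ebasis a) y))" by (rule glin_comp[OF glin_starT glin_mulT2])
      show "glin (\<lambda>y. mulT mulB (starT starB y) (starT starB (ebasis a)))" by (rule glin_comp[OF glin_mulT1 glin_starT])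
      fix b assume b: "b \<in> Poly_Mapping.keys y"
      have la: "length a = n" using a x by (simp add: tens_space_def)
      have lb: "length b = n" using b y by (simp add: tens_space_def)
      show "starT starB (mulT mulB (ebasis a) (ebasis b)) = mulT mulB (starT starB (ebasis b)) (starT starB (ebasis a))"
      proof -
        have eq: "map starB (map2 (\<lambda>i j. mulB (ebasis i) (ebasis j)) a b) =
            map2 mulB (map (\<lambda>j. starB (ebasis j)) b) (map (\<lambda>j. starB (ebasis j)) a)"
          by (rule map_star_map2[where s=starB and m=mulB, OF sm]) (simp add: la lb)
        have "starT starB (mulT mulB (ebasis a) (ebasis b)) = starT starB (pure (map2 (\<lambda>i j. mulB (ebasis i) (ebasis j)) a b))"
          using la lb by (simp add: mulT_ebasis Mb_def)
        also have "\<dots> = pure (map starB (map2 (\<lambda>i j. mulB (ebasis i) (ebasis j)) a b))"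
          by (rule starT_pure[OF gs])
        also have "\<dots> = pure (map2 mulB (map (\<lambda>j. starB (ebasis j)) b) (map (\<lambda>j. starB (ebasis j)) a))"
          by (simp only: eq)
        also have "\<dots> = mulT mulB (pure (map (\<lambda>j. starB (ebasis j)) b)) (pure (map (\<lambda>j. starB (ebasis j)) a))"
          by (rule mulT_pure[OF B, symmetric]) (simp add: la lb)
        also have "\<dots> = mulT mulB (starT starB (ebasis b)) (starT starB (ebasis a))"
          by (simp add: starT_ebasis)
        finally show ?thesis .
      qed
    qed
  qed
qed

lemma ts_oneT: "oneT oneB d \<in> tens_space d"
  unfolding oneT_def using ts_pure[of "replicate d oneB"] by simp

lemma starT_oneT:
  assumes st: "anti_automorphism_B mulB oneB starB"
  shows "starT starB (oneT oneB d) = oneT oneB d"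
proof -
  have gs: "glin starB" and so: "starB oneB = oneB" using st by (simp_all add: anti_automorphism_B_def)
  show ?thesis unfolding oneT_def by (simp add: starT_pure[OF gs] so)
qed

lemma emb_def': "emb oneB d i Z = tprod (pure (replicate (i - 1) oneB)) (tprod Z (pure (replicate (d - i - 1) oneB)))"
  by (simp add: emb_def)

lemma ts_emb:
  assumes "1 \<le> i" "i < d" "Z \<in> tens_space 2"
  shows "emb oneB d i Z \<in> tens_space d"
proof -
  have "emb oneB d i Z \<in> tens_space ((i - 1) + (2 + (d - i - 1)))"
    unfolding emb_def' by (intro ts_tprod ts_pure[of "replicate _ oneB", simplified] assms(3))
  moreover have e: "(i - 1) + (2 + (d - i - 1)) = d" using assms by simp
  ultimately show ?thesis by (simp only: e)
qed

lemma glin_emb: "glin (emb oneB d i)"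
  unfolding emb_def'[abs_def] by (rule glin_comp[OF glin_tprod2 glin_tprod1])

lemma starT_emb:
  assumes st: "anti_automorphism_B mulB oneB starB"
  shows "starT starB (emb oneB d i Z) = emb oneB d i (starT starB Z)"
proof -
  have gs: "glin starB" and so: "starB oneB = oneB" using st by (simp_all add: anti_automorphism_B_def)
  show ?thesis unfolding emb_def' by (simp add: starT_tprod starT_pure[OF gs] so)
qed

lemma glin_loc: "glin (loc i \<phi>)"
  unfolding loc_def[abs_def] by (rule glin_lin_ext_fun)

lemma loc_ebasis: "loc i \<phi> (ebasis a) = tprod (ebasis (take (i - 1) a)) (tprod (\<phi> (ebasis [a ! (i - 1), a ! i])) (ebasis (drop (i + 1) a)))"
  by (simp add: loc_def)

lemma split3:
  assumes "1 \<le> i" "i < length a"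
  shows "take (i - 1) a @ [a ! (i - 1), a ! i] @ drop (i + 1) a = a"
proof -
  have "a ! i # drop (i + 1) a = drop i a" using assms Cons_nth_drop_Suc[of i a] by simp
  moreover have "a ! (i - 1) # drop i a = drop (i - 1) a" using assms Cons_nth_drop_Suc[of "i - 1" a] by simp
  ultimately show ?thesis by simp
qed

lemma ebasis_split3:
  assumes "1 \<le> i" "i < length a"
  shows "ebasis a = tprod (ebasis (take (i - 1) a)) (tprod (ebasis [a ! (i - 1), a ! i]) (ebasis (drop (i + 1) a)))"
  using split3[OF assms] by simp

lemma loc_tprod:
  assumes i: "1 \<le> i" and u: "u \<in> tens_space (i - 1)" and X: "X \<in> tens_space 2"
  shows "loc i \<phi> (tprod u (tprod X v)) = tprod u (tprod (lin_ext (\<lambda>a. \<phi> (ebasis a)) X) v)"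
proof (rule lin_eq_keys[of "\<lambda>u. loc i \<phi> (tprod u (tprod X v))" "\<lambda>u. tprod u (tprod (lin_ext (\<lambda>a. \<phi> (ebasis a)) X) v)"])
  show "glin (\<lambda>u. loc i \<phi> (tprod u (tprod X v)))" by (rule glin_comp[OF glin_loc glin_tprod1])
  show "glin (\<lambda>u. tprod u (tprod (lin_ext (\<lambda>a. \<phi> (ebasis a)) X) v))" by (rule glin_tprod1)
  fix p assume p: "p \<in> Poly_Mapping.keys u"
  have lp: "length p = i - 1" using p u by (simp add: tens_space_def)
  show "loc i \<phi> (tprod (ebasis p) (tprod X v)) = tprod (ebasis p) (tprod (lin_ext (\<lambda>a. \<phi> (ebasis a)) X) v)"
  proof (rule lin_eq_keys[of "\<lambda>X. loc i \<phi> (tprod (ebasis p) (tprod X v))" "\<lambda>X. tprod (ebasis p) (tprod (lin_ext (\<lambda>a. \<phi> (ebasis a)) X) v)"])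
    show "glin (\<lambda>X. loc i \<phi> (tprod (ebasis p) (tprod X v)))"
      by (rule glin_comp[OF glin_loc glin_comp[OF glin_tprod2 glin_tprod1]])
    show "glin (\<lambda>X. tprod (ebasis p) (tprod (lin_ext (\<lambda>a. \<phi> (ebasis a)) X) v))"
      by (rule glin_comp[OF glin_tprod2 glin_comp[OF glin_tprod1 glin_lin_ext_fun]])
    fix q assume q: "q \<in> Poly_Mapping.keys X"
    have lq: "length q = 2" using q X by (simp add: tens_space_def)
    then obtain q0 q1 where qq: "q = [q0, q1]"
      by (metis (no_types, lifting) One_nat_def Suc_length_conv length_0_conv numeral_2_eq_2)
    show "loc i \<phi> (tprod (ebasis p) (tprod (ebasis q) v)) = tprod (ebasis p) (tprod (lin_ext (\<lambda>a. \<phi> (ebasis a)) (ebasis q)) v)"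
    proof (rule lin_eq_keys[of "\<lambda>v. loc i \<phi> (tprod (ebasis p) (tprod (ebasis q) v))" "\<lambda>v. tprod (ebasis p) (tprod (lin_ext (\<lambda>a. \<phi> (ebasis a)) (ebasis q)) v)"])
      show "glin (\<lambda>v. loc i \<phi> (tprod (ebasis p) (tprod (ebasis q) v)))"
        by (rule glin_comp[OF glin_loc glin_comp[OF glin_tprod2 glin_tprod2]])
      show "glin (\<lambda>v. tprod (ebasis p) (tprod (lin_ext (\<lambda>a. \<phi> (ebasis a)) (ebasis q)) v))"
        by (rule glin_comp[OF glin_tprod2 glin_tprod2])
      fix r
      have t1: "take (i - 1) (p @ q @ r) = p" using lp by simp
      have t2: "(p @ q @ r) ! (i - 1) = q0" using lp qq by (simp add: nth_append)
      have ii: "i = Suc (length p)" using lp i by simp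
      have t3: "(p @ q @ r) ! i = q1" using qq by (simp add: ii nth_append)
      have t4: "drop (i + 1) (p @ q @ r) = r" using lp qq i by simp
      show "loc i \<phi> (tprod (ebasis p) (tprod (ebasis q) (ebasis r))) =
        tprod (ebasis p) (tprod (lin_ext (\<lambda>a. \<phi> (ebasis a)) (ebasis q)) (ebasis r))"
      proof -
        have e3: "tprod (ebasis p) (tprod (ebasis q) (ebasis r)) = ebasis (p @ q @ r)" by simp
        show ?thesis unfolding e3 loc_ebasis t1 t2 t3 t4 by (simp add: qq)
      qed
    qed
  qed
qed

lemma loc_emb:
  assumes "1 \<le> i" "Z \<in> tens_space 2"
  shows "loc i \<phi> (emb oneB d i Z) = emb oneB d i (lin_ext (\<lambda>a. \<phi> (ebasis a)) Z)"
  unfolding emb_def' using ts_pure[of "replicate (i - 1) oneB"]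
  by (simp add: loc_tprod[OF assms(1) _ assms(2)])

lemma ts_loc:
  assumes "1 \<le> i" "i < n" "x \<in> tens_space n" "\<And>q. length q = 2 \<Longrightarrow> \<phi> (ebasis q) \<in> tens_space 2"
  shows "loc i \<phi> x \<in> tens_space n"
  unfolding loc_def
proof (rule ts_lin_ext)
  fix a assume "a \<in> Poly_Mapping.keys x"
  then have la: "length a = n" using assms(3) by (simp add: tens_space_def)
  have "tprod (ebasis (take (i - 1) a)) (tprod (\<phi> (ebasis [a ! (i - 1), a ! i])) (ebasis (drop (i + 1) a)))
    \<in> tens_space ((i - 1) + (2 + (n - (i + 1))))"
    by (intro ts_tprod ts_ebasis assms(4)) (use la assms in auto)
  moreover have e: "(i - 1) + (2 + (n - (i + 1))) = n" using assms la by simp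
  ultimately show "tprod (ebasis (take (i - 1) a)) (tprod (\<phi> (ebasis [a ! (i - 1), a ! i])) (ebasis (drop (i + 1) a)))
    \<in> tens_space n" by (simp only: e)
qed

lemma lookup_lift1: "Poly_Mapping.lookup (lift1 b) [j] = Poly_Mapping.lookup b j"
  unfolding lift1_def lookup_sum by (simp add: lookup_single when_def in_keys_iff)

lemma mulB_zero_left: "K_algebra_B mulB oneB \<Longrightarrow> mulB 0 y = 0"
  using glin_zero[OF glin_mulB1] by blast

lemma oneB_faithful:
  fixes mulB :: "('j \<Rightarrow>\<^sub>0 'k::comm_ring_1) \<Rightarrow> ('j \<Rightarrow>\<^sub>0 'k) \<Rightarrow> ('j \<Rightarrow>\<^sub>0 'k)"
  assumes B: "K_algebra_B mulB oneB" and c: "\<And>j. c * Poly_Mapping.lookup oneB j = 0"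
  shows "c = 0"
proof -
  have z: "pscale c oneB = 0" by (rule poly_mapping_eqI) (simp add: c)
  have z2: "pscale c (ebasis j) = 0" for j :: 'j
  proof -
    have "pscale c (ebasis j) = pscale c (mulB oneB (ebasis j))" using B by (simp add: K_algebra_B_def)
    also have "\<dots> = mulB (pscale c oneB) (ebasis j)" using B by (simp add: K_algebra_B_def)
    also have "\<dots> = 0" by (simp add: z mulB_zero_left[OF B])
    finally show ?thesis .
  qed
  have "Poly_Mapping.lookup (pscale c (ebasis j)) j = 0" for j :: 'j unfolding z2 by simp
  then show ?thesis by (simp add: ebasis_def)
qed

lemma pure_ones_faithful:
  fixes mulB :: "('j \<Rightarrow>\<^sub>0 'k::comm_ring_1) \<Rightarrow> ('j \<Rightarrow>\<^sub>0 'k) \<Rightarrow> ('j \<Rightarrow>\<^sub>0 'k)"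
  assumes B: "K_algebra_B mulB oneB"
  shows "(\<And>a. length a = m \<Longrightarrow> c * Poly_Mapping.lookup (pure (replicate m oneB)) a = 0) \<Longrightarrow> c = 0"
proof (induction m arbitrary: c)
  case 0
  then show ?case using "0.prems"[of "[]"] by (simp add: ebasis_def)
next
  case (Suc m)
  have "c * Poly_Mapping.lookup oneB j = 0" for j
  proof (rule Suc.IH)
    fix a :: "'j list" assume la: "length a = m"
    have "Poly_Mapping.lookup (pure (replicate (Suc m) oneB)) (j # a) =
        Poly_Mapping.lookup oneB j * Poly_Mapping.lookup (pure (replicate m oneB)) a"
      by (simp add: pure_Cons lookup_tprod[OF ts_lift1] lookup_lift1)
    then show "c * Poly_Mapping.lookup oneB j * Poly_Mapping.lookup (pure (replicate m oneB)) a = 0"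
      using Suc.prems[of "j # a"] la by (simp add: mult.assoc)
  qed
  then show ?case by (rule oneB_faithful[OF B])
qed

lemma emb_zero:
  assumes B: "K_algebra_B mulB oneB" and i: "1 \<le> i" "i < d" and Z: "Z \<in> tens_space 2"
    and e: "emb oneB d i Z = 0"
  shows "Z = 0"
proof (rule poly_mapping_eqI)
  fix q
  show "Poly_Mapping.lookup Z q = Poly_Mapping.lookup 0 q"
  proof (cases "length q = 2")
    case False
    then have "q \<notin> Poly_Mapping.keys Z" using Z by (auto simp: tens_space_def)
    then show ?thesis by (simp add: in_keys_iff)
  next
    case True
    define P1 where "P1 = pure (replicate (i - 1) oneB)"
    define P2 where "P2 = pure (replicate (d - i - 1) oneB)"
    have P1: "P1 \<in> tens_space (i - 1)" unfolding P1_def using ts_pure[of "replicate (i - 1) oneB"] by simp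
    have key: "Poly_Mapping.lookup P1 u * (Poly_Mapping.lookup Z q * Poly_Mapping.lookup P2 v) = 0"
      if "length u = i - 1" for u v
    proof -
      have "Poly_Mapping.lookup (emb oneB d i Z) (u @ q @ v) =
          Poly_Mapping.lookup P1 u * (Poly_Mapping.lookup Z q * Poly_Mapping.lookup P2 v)"
        unfolding emb_def' P1_def[symmetric] P2_def[symmetric]
        using that True by (simp add: lookup_tprod[OF P1] lookup_tprod[OF Z])
      then show ?thesis using e by simp
    qed
    have k2: "Poly_Mapping.lookup Z q * Poly_Mapping.lookup P1 u = 0" if "length u = i - 1" for u
    proof -
      have "Poly_Mapping.lookup P1 u * Poly_Mapping.lookup Z q = 0"
      proof (rule pure_ones_faithful[OF B, of "d - i - 1"])
        fix v :: "'a list" assume "length v = d - i - 1"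
        show "Poly_Mapping.lookup P1 u * Poly_Mapping.lookup Z q * Poly_Mapping.lookup (pure (replicate (d - i - 1) oneB)) v = 0"
          using key[OF that, of v] unfolding P2_def by (simp only: mult.assoc)
      qed
      then show ?thesis by (simp only: mult.commute)
    qed
    have "Poly_Mapping.lookup Z q = 0"
    proof (rule pure_ones_faithful[OF B, of "i - 1"])
      fix u :: "'a list" assume "length u = i - 1"
      then show "Poly_Mapping.lookup Z q * Poly_Mapping.lookup (pure (replicate (i - 1) oneB)) u = 0"
        using k2 unfolding P1_def by blast
    qed
    then show ?thesis by simp
  qed
qed

lemma add_pscale_neg: "x + pscale (-1) x = 0"
  by (rule poly_mapping_eqI) (simp add: lookup_add)

lemma emb_inj:
  assumes B: "K_algebra_B mulB oneB" and i: "1 \<le> i" "i < d" and Z: "Z1 \<in> tens_space 2" "Z2 \<in> tens_space 2"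
    and e: "emb oneB d i Z1 = emb oneB d i Z2"
  shows "Z1 = Z2"
proof -
  have "emb oneB d i (Z1 + pscale (-1) Z2) = emb oneB d i Z1 + pscale (-1) (emb oneB d i Z2)"
    by (simp add: glin_add[OF glin_emb] glin_pscale[OF glin_emb])
  also have "\<dots> = 0" unfolding e by (rule add_pscale_neg)
  finally have z0: "Z1 + pscale (-1) Z2 = 0"
    by (rule emb_zero[OF B i ts_add[OF Z(1) ts_pscale[OF Z(2)]]])
  have h: "Poly_Mapping.lookup Z1 k + (-1) * Poly_Mapping.lookup Z2 k = 0" for k
    using arg_cong[OF z0, of "\<lambda>x. Poly_Mapping.lookup x k"] by (simp only: lookup_add lookup_pscale lookup_zero)
  have "Poly_Mapping.lookup Z1 k = Poly_Mapping.lookup Z2 k" for k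
  proof -
    have "Poly_Mapping.lookup Z1 k - Poly_Mapping.lookup Z2 k = 0" using h[of k] by simp
    then show ?thesis by simp
  qed
  then show ?thesis by (rule poly_mapping_eqI)
qed



section \<open>The algebra W\<close>

locale qwp =
  fixes mulB :: "('j \<Rightarrow>\<^sub>0 'k::comm_ring_1) \<Rightarrow> ('j \<Rightarrow>\<^sub>0 'k) \<Rightarrow> ('j \<Rightarrow>\<^sub>0 'k)"
    and oneB :: "'j \<Rightarrow>\<^sub>0 'k"
    and starB :: "('j \<Rightarrow>\<^sub>0 'k) \<Rightarrow> ('j \<Rightarrow>\<^sub>0 'k)"
    and S R :: "'j list \<Rightarrow>\<^sub>0 'k"
    and \<sigma> \<rho> :: "('j list \<Rightarrow>\<^sub>0 'k) \<Rightarrow> ('j list \<Rightarrow>\<^sub>0 'k)"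
    and smul :: "'k \<Rightarrow> 'w::ring_1 \<Rightarrow> 'w"
    and iota :: "('j list \<Rightarrow>\<^sub>0 'k) \<Rightarrow> 'w"
    and H :: "nat \<Rightarrow> 'w"
    and d :: nat
  assumes d2: "2 \<le> d"
    and B_alg: "K_algebra_B mulB oneB"
    and star_B: "anti_automorphism_B mulB oneB starB"
    and S_in: "S \<in> tens_space 2" and R_in: "R \<in> tens_space 2"
    and sigma_lin: "lin_on (tens_space 2) \<sigma>" and sigma_into: "\<sigma> ` tens_space 2 \<subseteq> tens_space 2"
    and rho_lin: "lin_on (tens_space 2) \<rho>" and rho_into: "\<rho> ` tens_space 2 \<subseteq> tens_space 2"
    and rels: "qwp_relations smul iota H d mulB oneB S R \<sigma> \<rho>"
    and PBW: "has_PBW_basis smul iota H d"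
begin

abbreviation T where "T \<equiv> tens_space d"
abbreviation st where "st \<equiv> starT starB"

lemma KW: "K_algebra_W smul" using rels by (simp add: qwp_relations_def)

lemma smul_add_r: "smul c (x + y) = smul c x + smul c y" using KW by (simp add: K_algebra_W_def)
lemma smul_add_l: "smul (c + c') x = smul c x + smul c' x" using KW by (simp add: K_algebra_W_def)
lemma smul_smul: "smul c (smul c' x) = smul (c * c') x" using KW by (simp add: K_algebra_W_def)
lemma smul_one [simp]: "smul 1 x = x" using KW by (simp add: K_algebra_W_def)
lemma smul_mult_both: "\<forall>c x y. smul c (x * y) = smul c x * y \<and> smul c (x * y) = x * smul c y"
  using KW unfolding K_algebra_W_def by blast
lemma smul_mult_l: "smul c x * y = smul c (x * y)" using smul_mult_both by metis
lemma smul_mult_r: "x * smul c y = smul c (x * y)" using smul_mult_both by metis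
lemma smul_zero_l [simp]: "smul 0 x = 0"
  using smul_add_l[of 0 0 x] by simp
lemma smul_zero_r [simp]: "smul c 0 = 0"
  using smul_add_r[of c 0 0] by simp
lemma smul_sum: "smul c (sum f A) = (\<Sum>i\<in>A. smul c (f i))"
  by (induction A rule: infinite_finite_induct) (simp_all add: smul_add_r)
lemma smul_neg: "smul c (- x) = - smul c x"
  using smul_add_r[of c x "- x"] by (simp add: add_eq_0_iff2)

lemma iota_add: "x \<in> T \<Longrightarrow> y \<in> T \<Longrightarrow> iota (x + y) = iota x + iota y"
  using rels by (simp add: qwp_relations_def)
lemma iota_mult: "x \<in> T \<Longrightarrow> y \<in> T \<Longrightarrow> iota (mulT mulB x y) = iota x * iota y"
  using rels by (simp add: qwp_relations_def)
lemma iota_pscale: "x \<in> T \<Longrightarrow> iota (pscale c x) = smul c (iota x)"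
  using rels by (simp add: qwp_relations_def)
lemma iota_one: "iota (oneT oneB d) = 1"
  using rels by (simp add: qwp_relations_def)
lemma iota_zero [simp]: "iota 0 = 0"
  using iota_add[of 0 0] by simp
lemma braid: "\<forall>k. 1 \<le> k \<and> k + 1 < d \<longrightarrow> H k * H (k + 1) * H k = H (k + 1) * H k * H (k + 1)"
  using rels by (simp add: qwp_relations_def)
lemma commH: "\<forall>i\<in>{1..<d}. \<forall>j\<in>{1..<d}. i + 2 \<le> j \<or> j + 2 \<le> i \<longrightarrow> H i * H j = H j * H i"
  using rels by (simp add: qwp_relations_def)
lemma quad: "i \<in> {1..<d} \<Longrightarrow> H i * H i = iota (emb oneB d i S) * H i + iota (emb oneB d i R)"
  using rels by (simp add: qwp_relations_def)
lemma mixed: "i \<in> {1..<d} \<Longrightarrow> b \<in> T \<Longrightarrow> H i * iota b = iota (loc i \<sigma> b) * H i + iota (loc i \<rho> b)"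
  using rels by (simp add: qwp_relations_def)

lemma iota_sum: "(\<And>i. i \<in> A \<Longrightarrow> f i \<in> T) \<Longrightarrow> iota (sum f A) = (\<Sum>i\<in>A. iota (f i))"
proof (induction A rule: infinite_finite_induct)
  case (insert a A) then show ?case by (simp add: iota_add ts_sum)
qed simp_all

lemma iota_expand: "x \<in> T \<Longrightarrow> iota x = (\<Sum>a\<in>Poly_Mapping.keys x. smul (Poly_Mapping.lookup x a) (iota (ebasis a)))"
proof -
  assume x: "x \<in> T"
  have m: "ebasis a \<in> T" if "a \<in> Poly_Mapping.keys x" for a
    using x that by (intro ts_ebasis) (simp add: tens_space_def)
  have "iota x = iota (lin_ext ebasis x)" by (simp add: lin_ext_ebasis_id)
  also have "\<dots> = (\<Sum>a\<in>Poly_Mapping.keys x. iota (pscale (Poly_Mapping.lookup x a) (ebasis a)))"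
    unfolding lin_ext_def by (rule iota_sum) (rule ts_pscale[OF m])
  also have "\<dots> = (\<Sum>a\<in>Poly_Mapping.keys x. smul (Poly_Mapping.lookup x a) (iota (ebasis a)))"
    by (rule sum.cong[OF refl]) (simp add: iota_pscale m)
  finally show ?thesis .
qed

lemma iota_lin_ext:
  assumes "\<And>a. a \<in> Poly_Mapping.keys x \<Longrightarrow> f a \<in> T"
  shows "iota (lin_ext f x) = (\<Sum>a\<in>Poly_Mapping.keys x. smul (Poly_Mapping.lookup x a) (iota (f a)))"
  unfolding lin_ext_def using assms by (simp add: iota_sum ts_pscale iota_pscale)

lemma prod_beq: "beq d u v \<Longrightarrow> prod_list (map H u) = prod_list (map H v)"
  by (rule beq_prod[OF braid commH])

lemma redw_Nil: "redw d []" by (simp add: redw_def)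

lemma redw_single: "i \<in> {1..<d} \<Longrightarrow> redw d [i]"
proof -
  assume i: "i \<in> {1..<d}"
  have "ninv d (id \<circ> sref i) = Suc (ninv d id)"
    by (rule ninv_asc[OF permutes_id i]) simp
  then show ?thesis using i by (simp add: redw_def)
qed

lemma Hw_id: "Hw H d id = 1"
proof -
  have p: "id permutes {1..d}" by (rule permutes_id)
  have "beq d (cw d id) []"
    by (rule matsumoto[OF cw_redw[OF p] redw_Nil]) (simp add: cw_props[OF p])
  then show ?thesis unfolding Hw_cw using prod_beq by fastforce
qed

lemma Hw_sref: "i \<in> {1..<d} \<Longrightarrow> Hw H d (sref i) = H i"
proof -
  assume i: "i \<in> {1..<d}"
  have p: "sref i permutes {1..d}" by (rule sref_permutes[OF i])
  have "beq d (cw d (sref i)) [i]"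
    by (rule matsumoto[OF cw_redw[OF p] redw_single[OF i]]) (simp add: cw_props[OF p])
  then show ?thesis unfolding Hw_cw using prod_beq by fastforce
qed

subsection \<open>PBW coordinates\<close>

definition Dom :: "('j list \<times> (nat \<Rightarrow> nat)) set" where
  "Dom = {(a, w). length a = d \<and> w permutes {1..d}}"

definition bas :: "'j list \<times> (nat \<Rightarrow> nat) \<Rightarrow> 'w" where
  "bas p = iota (ebasis (fst p)) * Hw H d (snd p)"

definition rep :: "('j list \<times> (nat \<Rightarrow> nat) \<Rightarrow>\<^sub>0 'k) \<Rightarrow> 'w" where
  "rep f = (\<Sum>p\<in>Poly_Mapping.keys f. smul (Poly_Mapping.lookup f p) (bas p))"

definition C :: "'w \<Rightarrow> ('j list \<times> (nat \<Rightarrow> nat) \<Rightarrow>\<^sub>0 'k)" where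
  "C z = (THE f. Poly_Mapping.keys f \<subseteq> Dom \<and> z = rep f)"

lemma PBW': "\<exists>!f. Poly_Mapping.keys f \<subseteq> Dom \<and> z = rep f"
proof -
  have "\<forall>x. \<exists>!f :: ('j list \<times> (nat \<Rightarrow> nat)) \<Rightarrow>\<^sub>0 'k.
        Poly_Mapping.keys f \<subseteq> {(a, w). length a = d \<and> w permutes {1..d}} \<and>
        x = (\<Sum>p\<in>Poly_Mapping.keys f. smul (Poly_Mapping.lookup f p) (iota (ebasis (fst p)) * Hw H d (snd p)))"
    using PBW unfolding has_PBW_basis_def .
  then show ?thesis unfolding Dom_def rep_def bas_def by (rule spec)
qed

lemma C_spec: "Poly_Mapping.keys (C z) \<subseteq> Dom \<and> z = rep (C z)"
  unfolding C_def by (rule theI'[OF PBW'])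

lemma C_unique: "Poly_Mapping.keys f \<subseteq> Dom \<Longrightarrow> z = rep f \<Longrightarrow> C z = f"
  unfolding C_def by (rule the1_equality[OF PBW']) simp

lemma rep_superset:
  assumes "finite A" "Poly_Mapping.keys f \<subseteq> A"
  shows "rep f = (\<Sum>p\<in>A. smul (Poly_Mapping.lookup f p) (bas p))"
  unfolding rep_def
  by (rule sum.mono_neutral_left) (use assms in \<open>auto simp: in_keys_iff\<close>)

lemma rep_add: "rep (f + g) = rep f + rep g"
proof -
  let ?A = "Poly_Mapping.keys f \<union> Poly_Mapping.keys g"
  have "rep (f + g) = (\<Sum>p\<in>?A. smul (Poly_Mapping.lookup (f + g) p) (bas p))"
    by (rule rep_superset) (auto dest: subsetD[OF keys_add])
  also have "\<dots> = (\<Sum>p\<in>?A. smul (Poly_Mapping.lookup f p) (bas p)) + (\<Sum>p\<in>?A. smul (Poly_Mapping.lookup g p) (bas p))"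
    by (simp add: lookup_add smul_add_l sum.distrib)
  also have "\<dots> = rep f + rep g" by (simp add: rep_superset[symmetric])
  finally show ?thesis .
qed

lemma rep_pscale: "rep (pscale c f) = smul c (rep f)"
proof -
  have "rep (pscale c f) = (\<Sum>p\<in>Poly_Mapping.keys f. smul (Poly_Mapping.lookup (pscale c f) p) (bas p))"
    by (rule rep_superset) (auto simp: in_keys_iff)
  then show ?thesis by (simp add: rep_def smul_sum smul_smul)
qed

lemma keys_C: "Poly_Mapping.keys (C z) \<subseteq> Dom" using C_spec[of z] by (rule conjunct1)
lemma rep_C: "rep (C z) = z" using conjunct2[OF C_spec[of z]] by (rule sym)

lemma C_add: "C (x + y) = C x + C y"
proof (rule C_unique)
  show "Poly_Mapping.keys (C x + C y) \<subseteq> Dom" using keys_C[of x] keys_C[of y] keys_add[of "C x" "C y"] by blast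
  show "x + y = rep (C x + C y)" by (simp add: rep_add rep_C)
qed

lemma C_smul: "C (smul c x) = pscale c (C x)"
proof (rule C_unique)
  show "Poly_Mapping.keys (pscale c (C x)) \<subseteq> Dom" using keys_C[of x] keys_pscale[of c "C x"] by blast
  show "smul c x = rep (pscale c (C x))" by (simp add: rep_pscale rep_C)
qed

definition tag :: "(nat \<Rightarrow> nat) \<Rightarrow> ('j list \<Rightarrow>\<^sub>0 'k) \<Rightarrow> ('j list \<times> (nat \<Rightarrow> nat) \<Rightarrow>\<^sub>0 'k)" where
  "tag w b = (\<Sum>a\<in>Poly_Mapping.keys b. Poly_Mapping.single (a, w) (Poly_Mapping.lookup b a))"

lemma lookup_tag: "Poly_Mapping.lookup (tag w b) (a, v) = (if v = w then Poly_Mapping.lookup b a else 0)"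
proof -
  have "Poly_Mapping.lookup (tag w b) (a, v) =
      (\<Sum>a'\<in>Poly_Mapping.keys b. if a' = a \<and> w = v then Poly_Mapping.lookup b a' else 0)"
    by (simp add: tag_def lookup_sum lookup_single when_def)
  also have "\<dots> = (if v = w then Poly_Mapping.lookup b a else 0)"
    by (cases "v = w") (auto simp: in_keys_iff)
  finally show ?thesis .
qed

lemma keys_tag: "Poly_Mapping.keys (tag w b) \<subseteq> Poly_Mapping.keys b \<times> {w}"
proof
  fix p assume "p \<in> Poly_Mapping.keys (tag w b)"
  then show "p \<in> Poly_Mapping.keys b \<times> {w}"
    by (cases p) (auto simp: in_keys_iff lookup_tag split: if_splits)
qed

lemma rep_tag:
  assumes b: "b \<in> T"
  shows "rep (tag w b) = iota b * Hw H d w"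
proof -
  have "rep (tag w b) = (\<Sum>p\<in>Poly_Mapping.keys b \<times> {w}. smul (Poly_Mapping.lookup (tag w b) p) (bas p))"
    by (rule rep_superset) (simp_all add: keys_tag)
  also have "\<dots> = (\<Sum>a\<in>Poly_Mapping.keys b. smul (Poly_Mapping.lookup b a) (iota (ebasis a) * Hw H d w))"
  proof -
    have "Poly_Mapping.keys b \<times> {w} = (\<lambda>a. (a, w)) ` Poly_Mapping.keys b" by auto
    moreover have "inj_on (\<lambda>a. (a, w)) (Poly_Mapping.keys b)" by (auto simp: inj_on_def)
    ultimately show ?thesis by (simp add: sum.reindex lookup_tag bas_def)
  qed
  also have "\<dots> = (\<Sum>a\<in>Poly_Mapping.keys b. smul (Poly_Mapping.lookup b a) (iota (ebasis a))) * Hw H d w"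
    by (simp add: sum_distrib_right smul_mult_l)
  also have "\<dots> = iota b * Hw H d w" by (simp add: iota_expand[OF b])
  finally show ?thesis .
qed

lemma C_tag:
  assumes b: "b \<in> T" and w: "w permutes {1..d}"
  shows "C (iota b * Hw H d w) = tag w b"
proof (rule C_unique)
  show "Poly_Mapping.keys (tag w b) \<subseteq> Dom"
    using keys_tag[of w b] b w by (auto simp: Dom_def tens_space_def)
  show "iota b * Hw H d w = rep (tag w b)" by (simp add: rep_tag[OF b])
qed

definition Gam :: "('j list \<times> (nat \<Rightarrow> nat) \<Rightarrow> 'w) \<Rightarrow> 'w \<Rightarrow> 'w" where
  "Gam g z = (\<Sum>p\<in>Poly_Mapping.keys (C z). smul (Poly_Mapping.lookup (C z) p) (g p))"

lemma Gam_superset: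
  assumes "finite A" "Poly_Mapping.keys f \<subseteq> A"
  shows "(\<Sum>p\<in>Poly_Mapping.keys f. smul (Poly_Mapping.lookup f p) (g p)) = (\<Sum>p\<in>A. smul (Poly_Mapping.lookup f p) (g p))"
  by (rule sum.mono_neutral_left) (use assms in \<open>auto simp: in_keys_iff\<close>)

lemma Gam_add: "Gam g (x + y) = Gam g x + Gam g y"
proof -
  let ?A = "Poly_Mapping.keys (C x) \<union> Poly_Mapping.keys (C y)"
  have "Gam g (x + y) = (\<Sum>p\<in>?A. smul (Poly_Mapping.lookup (C x + C y) p) (g p))"
    unfolding Gam_def C_add by (rule Gam_superset) (auto dest: subsetD[OF keys_add])
  also have "\<dots> = (\<Sum>p\<in>?A. smul (Poly_Mapping.lookup (C x) p) (g p)) + (\<Sum>p\<in>?A. smul (Poly_Mapping.lookup (C y) p) (g p))"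
    by (simp add: lookup_add smul_add_l sum.distrib)
  also have "\<dots> = Gam g x + Gam g y"
  proof -
    have e1: "(\<Sum>p\<in>Poly_Mapping.keys (C x). smul (Poly_Mapping.lookup (C x) p) (g p)) = (\<Sum>p\<in>?A. smul (Poly_Mapping.lookup (C x) p) (g p))"
      by (rule Gam_superset) auto
    have e2: "(\<Sum>p\<in>Poly_Mapping.keys (C y). smul (Poly_Mapping.lookup (C y) p) (g p)) = (\<Sum>p\<in>?A. smul (Poly_Mapping.lookup (C y) p) (g p))"
      by (rule Gam_superset) auto
    show ?thesis unfolding Gam_def e1 e2 ..
  qed
  finally show ?thesis .
qed

lemma Gam_smul: "Gam g (smul c x) = smul c (Gam g x)"
proof -
  have "Gam g (smul c x) = (\<Sum>p\<in>Poly_Mapping.keys (C x). smul (Poly_Mapping.lookup (pscale c (C x)) p) (g p))"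
    unfolding Gam_def C_smul by (rule Gam_superset) (auto simp: in_keys_iff)
  then show ?thesis by (simp add: Gam_def smul_sum smul_smul)
qed

lemma Gam_zero: "Gam g 0 = 0"
  using Gam_smul[of g 0 0] by simp

lemma Gam_sum: "Gam g (sum f A) = (\<Sum>i\<in>A. Gam g (f i))"
  by (induction A rule: infinite_finite_induct) (simp_all add: Gam_zero Gam_add)

lemma Gam_basis:
  assumes b: "b \<in> T" and w: "w permutes {1..d}"
  shows "Gam g (iota b * Hw H d w) = (\<Sum>a\<in>Poly_Mapping.keys b. smul (Poly_Mapping.lookup b a) (g (a, w)))"
proof -
  have "Gam g (iota b * Hw H d w) = (\<Sum>p\<in>Poly_Mapping.keys b \<times> {w}. smul (Poly_Mapping.lookup (tag w b) p) (g p))"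
    unfolding Gam_def C_tag[OF b w] by (rule Gam_superset) (simp_all add: keys_tag)
  also have "\<dots> = (\<Sum>a\<in>Poly_Mapping.keys b. smul (Poly_Mapping.lookup b a) (g (a, w)))"
  proof -
    have "Poly_Mapping.keys b \<times> {w} = (\<lambda>a. (a, w)) ` Poly_Mapping.keys b" by auto
    moreover have "inj_on (\<lambda>a. (a, w)) (Poly_Mapping.keys b)" by (auto simp: inj_on_def)
    ultimately show ?thesis by (simp add: sum.reindex lookup_tag)
  qed
  finally show ?thesis .
qed

lemma expand_W: "z = (\<Sum>p\<in>Poly_Mapping.keys (C z). smul (Poly_Mapping.lookup (C z) p) (iota (ebasis (fst p)) * Hw H d (snd p)))"
  using rep_C[of z] by (simp add: rep_def bas_def)

lemma Dom_mem: "p \<in> Poly_Mapping.keys (C z) \<Longrightarrow> length (fst p) = d \<and> snd p permutes {1..d}"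
  using keys_C[of z] by (auto simp: Dom_def)

lemma sref_ne_id: "sref i \<noteq> id"
proof
  assume "sref i = id"
  then have "sref i i = i" by simp
  then show False by (simp add: sref_def)
qed

lemma coord2:
  assumes i: "i \<in> {1..<d}" and xy: "x \<in> T" "y \<in> T" "x' \<in> T" "y' \<in> T"
    and e: "iota x * H i + iota y = iota x' * H i + iota y'"
  shows "x = x' \<and> y = y'"
proof -
  have ps: "sref i permutes {1..d}" by (rule sref_permutes[OF i])
  have pid: "id permutes {1..d}" by (rule permutes_id)
  have cc: "C (iota u * H i + iota v) = tag (sref i) u + tag id v" if "u \<in> T" "v \<in> T" for u v
  proof -
    have "iota u * H i + iota v = iota u * Hw H d (sref i) + iota v * Hw H d id"
      by (simp add: Hw_sref[OF i] Hw_id)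
    then show ?thesis by (simp add: C_add C_tag[OF that(1) ps] C_tag[OF that(2) pid])
  qed
  have eq: "tag (sref i) x + tag id y = tag (sref i) x' + tag id y'"
    using cc[OF xy(1,2)] cc[OF xy(3,4)] e by simp
  have "Poly_Mapping.lookup x a = Poly_Mapping.lookup x' a" for a
    using arg_cong[OF eq, of "\<lambda>f. Poly_Mapping.lookup f (a, sref i)"] sref_ne_id[of i]
    by (simp add: lookup_add lookup_tag)
  moreover have "Poly_Mapping.lookup y a = Poly_Mapping.lookup y' a" for a
    using arg_cong[OF eq, of "\<lambda>f. Poly_Mapping.lookup f (a, id)"] sref_ne_id[of i]
    by (simp add: lookup_add lookup_tag)
  ultimately show ?thesis by (simp add: poly_mapping_eqI)
qed

end



context qwp begin

lemma sigma_T2: "X \<in> tens_space 2 \<Longrightarrow> \<sigma> X \<in> tens_space 2" using sigma_into by blast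
lemma rho_T2: "X \<in> tens_space 2 \<Longrightarrow> \<rho> X \<in> tens_space 2" using rho_into by blast

lemma sigma_expand: "X \<in> tens_space 2 \<Longrightarrow> lin_ext (\<lambda>a. \<sigma> (ebasis a)) X = \<sigma> X"
  using lin_on_expand[OF sigma_lin] by simp
lemma rho_expand: "X \<in> tens_space 2 \<Longrightarrow> lin_ext (\<lambda>a. \<rho> (ebasis a)) X = \<rho> X"
  using lin_on_expand[OF rho_lin] by simp

lemma loc_sigma_T: "i \<in> {1..<d} \<Longrightarrow> b \<in> T \<Longrightarrow> loc i \<sigma> b \<in> T"
  by (rule ts_loc) (auto intro: sigma_T2 ts_ebasis)
lemma loc_rho_T: "i \<in> {1..<d} \<Longrightarrow> b \<in> T \<Longrightarrow> loc i \<rho> b \<in> T"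
  by (rule ts_loc) (auto intro: rho_T2 ts_ebasis)

lemma st_T: "b \<in> tens_space n \<Longrightarrow> st b \<in> tens_space n" by (rule ts_starT)

lemma emb_T: "i \<in> {1..<d} \<Longrightarrow> Z \<in> tens_space 2 \<Longrightarrow> emb oneB d i Z \<in> T"
  by (rule ts_emb) auto

lemma loc_sigma_emb: "i \<in> {1..<d} \<Longrightarrow> Z \<in> tens_space 2 \<Longrightarrow> loc i \<sigma> (emb oneB d i Z) = emb oneB d i (\<sigma> Z)"
  by (simp add: loc_emb sigma_expand)
lemma loc_rho_emb: "i \<in> {1..<d} \<Longrightarrow> Z \<in> tens_space 2 \<Longrightarrow> loc i \<rho> (emb oneB d i Z) = emb oneB d i (\<rho> Z)"
  by (simp add: loc_emb rho_expand)

lemma st_emb: "st (emb oneB d i Z) = emb oneB d i (st Z)"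
  by (rule starT_emb[OF star_B])

lemma emb_add: "emb oneB d i X + emb oneB d i Y = emb oneB d i (X + Y)"
  by (simp add: glin_add[OF glin_emb])

lemma one_in: "(1::nat) \<in> {1..<d}" using d2 by simp

lemma forward:
  assumes phi: "anti_hom_W smul \<phi>" and phi_iota: "\<forall>b\<in>T. \<phi> (iota b) = iota (st b)"
    and phi_H: "\<forall>i\<in>{1..<d}. \<phi> (H i) = H i"
  shows "(\<sigma> (st S) = S \<and> \<rho> (st S) + st R = R) \<and>
         (\<forall>b\<in>tens_space 2. \<sigma> (st (\<sigma> b)) = st b \<and> \<rho> (st (\<sigma> b)) + st (\<rho> b) = 0)"
proof -
  have padd: "\<phi> (x + y) = \<phi> x + \<phi> y" for x y using phi by (simp add: anti_hom_W_def)
  have pmul: "\<phi> (x * y) = \<phi> y * \<phi> x" for x y using phi by (simp add: anti_hom_W_def)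
  define i :: nat where "i = 1"
  have i1: "i \<in> {1..<d}" unfolding i_def by (rule one_in)
  have pH: "\<phi> (H i) = H i" using phi_H i1 by blast
  have pI: "\<phi> (iota b) = iota (st b)" if "b \<in> T" for b using phi_iota that by blast
  have G: "loc i \<sigma> (st (loc i \<sigma> b)) = st b \<and> loc i \<rho> (st (loc i \<sigma> b)) + st (loc i \<rho> b) = 0"
    if b: "b \<in> T" for b
  proof -
    have sb: "loc i \<sigma> b \<in> T" "loc i \<rho> b \<in> T" using loc_sigma_T[OF i1 b] loc_rho_T[OF i1 b] .
    have ssb: "st (loc i \<sigma> b) \<in> T" "st (loc i \<rho> b) \<in> T" using st_T sb by auto
    have m1: "loc i \<sigma> (st (loc i \<sigma> b)) \<in> T" "loc i \<rho> (st (loc i \<sigma> b)) \<in> T"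
      using loc_sigma_T[OF i1 ssb(1)] loc_rho_T[OF i1 ssb(1)] .
    have "\<phi> (H i * iota b) = iota (st b) * H i" by (simp add: pmul pH pI b)
    moreover have "\<phi> (H i * iota b) = \<phi> (iota (loc i \<sigma> b) * H i + iota (loc i \<rho> b))"
      using mixed[OF i1 b] by simp
    moreover have "\<dots> = H i * iota (st (loc i \<sigma> b)) + iota (st (loc i \<rho> b))"
      by (simp add: padd pmul pH pI sb)
    moreover have "\<dots> = iota (loc i \<sigma> (st (loc i \<sigma> b))) * H i +
        iota (loc i \<rho> (st (loc i \<sigma> b)) + st (loc i \<rho> b))"
      using mixed[OF i1 ssb(1)] by (simp add: iota_add m1(2) ssb(2) add.assoc)
    ultimately have "iota (st b) * H i + iota 0 = iota (loc i \<sigma> (st (loc i \<sigma> b))) * H i +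
        iota (loc i \<rho> (st (loc i \<sigma> b)) + st (loc i \<rho> b))" by simp
    from coord2[OF i1 st_T[OF b] ts_zero m1(1) ts_add[OF m1(2) ssb(2)] this]
    show ?thesis by simp
  qed
  have part2: "\<sigma> (st (\<sigma> X)) = st X \<and> \<rho> (st (\<sigma> X)) + st (\<rho> X) = 0" if X: "X \<in> tens_space 2" for X
  proof -
    have sX: "\<sigma> X \<in> tens_space 2" "\<rho> X \<in> tens_space 2" using sigma_T2 rho_T2 X by auto
    have ssX: "st (\<sigma> X) \<in> tens_space 2" "st (\<rho> X) \<in> tens_space 2" using st_T sX by auto
    have g: "loc i \<sigma> (st (loc i \<sigma> (emb oneB d i X))) = st (emb oneB d i X)"
      "loc i \<rho> (st (loc i \<sigma> (emb oneB d i X))) + st (loc i \<rho> (emb oneB d i X)) = 0"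
      using G[OF emb_T[OF i1 X]] by auto
    have e1: "emb oneB d i (\<sigma> (st (\<sigma> X))) = emb oneB d i (st X)"
      using g(1) by (simp add: loc_sigma_emb[OF i1] X sX ssX st_emb)
    have e2: "emb oneB d i (\<rho> (st (\<sigma> X)) + st (\<rho> X)) = 0"
      using g(2) by (simp add: loc_sigma_emb[OF i1] loc_rho_emb[OF i1] X sX ssX st_emb emb_add)
    have "\<sigma> (st (\<sigma> X)) = st X"
      by (rule emb_inj[OF B_alg _ _ sigma_T2[OF ssX(1)] st_T[OF X] e1]) (use i1 in auto)
    moreover have "\<rho> (st (\<sigma> X)) + st (\<rho> X) = 0"
      by (rule emb_zero[OF B_alg _ _ ts_add[OF rho_T2[OF ssX(1)] ssX(2)] e2]) (use i1 in auto)
    ultimately show ?thesis ..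
  qed
  have part1: "\<sigma> (st S) = S \<and> \<rho> (st S) + st R = R"
  proof -
    have sS: "st S \<in> tens_space 2" "st R \<in> tens_space 2" using st_T S_in R_in by auto
    have E: "emb oneB d i S \<in> T" "emb oneB d i R \<in> T" using emb_T[OF i1] S_in R_in by auto
    have sE: "st (emb oneB d i S) \<in> T" "st (emb oneB d i R) \<in> T" using st_T E by auto
    have m1: "loc i \<sigma> (st (emb oneB d i S)) \<in> T" "loc i \<rho> (st (emb oneB d i S)) \<in> T"
      using loc_sigma_T[OF i1 sE(1)] loc_rho_T[OF i1 sE(1)] .
    have "iota (emb oneB d i S) * H i + iota (emb oneB d i R) = H i * H i" using quad[OF i1] by simp
    also have "\<dots> = \<phi> (H i * H i)" by (simp add: pmul pH)
    also have "\<dots> = \<phi> (iota (emb oneB d i S) * H i + iota (emb oneB d i R))" using quad[OF i1] by simp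
    also have "\<dots> = H i * iota (st (emb oneB d i S)) + iota (st (emb oneB d i R))"
      by (simp add: padd pmul pH pI E)
    also have "\<dots> = iota (loc i \<sigma> (st (emb oneB d i S))) * H i +
        iota (loc i \<rho> (st (emb oneB d i S)) + st (emb oneB d i R))"
      using mixed[OF i1 sE(1)] by (simp add: iota_add m1(2) sE(2) add.assoc)
    finally have "iota (emb oneB d i S) * H i + iota (emb oneB d i R) =
        iota (loc i \<sigma> (st (emb oneB d i S))) * H i + iota (loc i \<rho> (st (emb oneB d i S)) + st (emb oneB d i R))" .
    from coord2[OF i1 E m1(1) ts_add[OF m1(2) sE(2)] this]
    have c: "emb oneB d i S = loc i \<sigma> (st (emb oneB d i S))"
      "emb oneB d i R = loc i \<rho> (st (emb oneB d i S)) + st (emb oneB d i R)" by auto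
    have c1: "emb oneB d i (\<sigma> (st S)) = emb oneB d i S"
      using c(1) by (simp add: st_emb loc_sigma_emb[OF i1 sS(1)])
    have c2: "emb oneB d i (\<rho> (st S) + st R) = emb oneB d i R"
      using c(2) by (simp add: st_emb loc_rho_emb[OF i1 sS(1)] emb_add)
    have "\<sigma> (st S) = S"
      by (rule emb_inj[OF B_alg _ _ sigma_T2[OF sS(1)] S_in c1]) (use i1 in auto)
    moreover have "\<rho> (st S) + st R = R"
      by (rule emb_inj[OF B_alg _ _ ts_add[OF rho_T2[OF sS(1)] sS(2)] R_in c2]) (use i1 in auto)
    ultimately show ?thesis ..
  qed
  show ?thesis using part1 part2 by blast
qed

end



datatype 'b gen = Hg nat | Bg 'b

fun nH :: "'b gen list \<Rightarrow> nat" where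
  "nH [] = 0" | "nH (Hg i # gs) = Suc (nH gs)" | "nH (Bg b # gs) = nH gs"

fun hs :: "'b gen list \<Rightarrow> nat list" where
  "hs [] = []" | "hs (Hg i # gs) = i # hs gs" | "hs (Bg b # gs) = hs gs"

lemma length_hs: "length (hs gs) = nH gs"
  by (induction gs rule: hs.induct) simp_all

lemma nH_append: "nH (xs @ ys) = nH xs + nH ys"
  by (induction xs rule: hs.induct) simp_all

lemma nH_map_Hg [simp]: "nH (map Hg u) = length u"
  by (induction u) simp_all

lemma hs_map_Hg [simp]: "hs (map Hg u) = u"
  by (induction u) simp_all

lemma glin_zero_fun: "glin (\<lambda>x. 0)"
  by (rule glinI) simp_all

locale qwp_cond = qwp +
  assumes cond1: "\<sigma> (starT starB S) = S \<and> \<rho> (starT starB S) + starT starB R = R"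
    and cond2: "\<forall>b\<in>tens_space 2. \<sigma> (starT starB (\<sigma> b)) = starT starB b \<and> \<rho> (starT starB (\<sigma> b)) + starT starB (\<rho> b) = 0"
begin

lemma L1:
  assumes i: "i \<in> {1..<d}"
  shows "loc i \<sigma> (st (emb oneB d i S)) = emb oneB d i S"
    "loc i \<rho> (st (emb oneB d i S)) + st (emb oneB d i R) = emb oneB d i R"
proof -
  have sS: "st S \<in> tens_space 2" using st_T S_in by auto
  show "loc i \<sigma> (st (emb oneB d i S)) = emb oneB d i S"
    using cond1 by (simp add: st_emb loc_sigma_emb[OF i sS])
  show "loc i \<rho> (st (emb oneB d i S)) + st (emb oneB d i R) = emb oneB d i R"
    using cond1 by (simp add: st_emb loc_rho_emb[OF i sS] emb_add)
qed

lemma L2: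
  assumes i: "i \<in> {1..<d}" and b: "b \<in> T"
  shows "loc i \<sigma> (st (loc i \<sigma> b)) = st b \<and> loc i \<rho> (st (loc i \<sigma> b)) + st (loc i \<rho> b) = 0"
proof -
  have i1: "1 \<le> i" using i by simp
  have base: "loc i \<sigma> (st (loc i \<sigma> (ebasis a))) = st (ebasis a) \<and>
      loc i \<rho> (st (loc i \<sigma> (ebasis a))) + st (loc i \<rho> (ebasis a)) = 0" if a: "length a = d" for a
  proof -
    define p where "p = take (i - 1) a"
    define q where "q = [a ! (i - 1), a ! i]"
    define r where "r = drop (i + 1) a"
    have ea: "ebasis a = tprod (ebasis p) (tprod (ebasis q) (ebasis r))"
      unfolding p_def q_def r_def by (rule ebasis_split3) (use i a in auto)
    have "length p = i - 1" using a i by (auto simp: p_def min_def)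
    then have lp: "st (ebasis p) \<in> tens_space (i - 1)" by (intro st_T ts_ebasis)
    have q2: "ebasis q \<in> tens_space 2" by (simp add: q_def ts_ebasis)
    have sq: "\<sigma> (ebasis q) \<in> tens_space 2" "\<rho> (ebasis q) \<in> tens_space 2" using sigma_T2 rho_T2 q2 by auto
    have ssq: "st (\<sigma> (ebasis q)) \<in> tens_space 2" "st (\<rho> (ebasis q)) \<in> tens_space 2" using st_T sq by auto
    have c2: "\<sigma> (st (\<sigma> (ebasis q))) = st (ebasis q)" "\<rho> (st (\<sigma> (ebasis q))) + st (\<rho> (ebasis q)) = 0"
      using cond2 q2 by auto
    have l1: "loc i \<sigma> (ebasis a) = tprod (ebasis p) (tprod (\<sigma> (ebasis q)) (ebasis r))"
      by (simp add: loc_ebasis p_def q_def r_def)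
    have l2: "loc i \<rho> (ebasis a) = tprod (ebasis p) (tprod (\<rho> (ebasis q)) (ebasis r))"
      by (simp add: loc_ebasis p_def q_def r_def)
    have A: "loc i \<sigma> (st (loc i \<sigma> (ebasis a))) = tprod (st (ebasis p)) (tprod (\<sigma> (st (\<sigma> (ebasis q)))) (st (ebasis r)))"
      unfolding l1 starT_tprod by (simp add: loc_tprod[OF i1 lp ssq(1)] sigma_expand[OF ssq(1)])
    have Bq: "loc i \<rho> (st (loc i \<sigma> (ebasis a))) = tprod (st (ebasis p)) (tprod (\<rho> (st (\<sigma> (ebasis q)))) (st (ebasis r)))"
      unfolding l1 starT_tprod by (simp add: loc_tprod[OF i1 lp ssq(1)] rho_expand[OF ssq(1)])
    have Cq: "st (loc i \<rho> (ebasis a)) = tprod (st (ebasis p)) (tprod (st (\<rho> (ebasis q))) (st (ebasis r)))"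
      unfolding l2 starT_tprod ..
    have sa: "st (ebasis a) = tprod (st (ebasis p)) (tprod (st (ebasis q)) (st (ebasis r)))"
      by (simp only: ea starT_tprod)
    have "loc i \<sigma> (st (loc i \<sigma> (ebasis a))) = st (ebasis a)"
      by (simp only: A c2(1) sa)
    moreover have "loc i \<rho> (st (loc i \<sigma> (ebasis a))) + st (loc i \<rho> (ebasis a)) = 0"
    proof -
      have "loc i \<rho> (st (loc i \<sigma> (ebasis a))) + st (loc i \<rho> (ebasis a)) =
          tprod (st (ebasis p)) (tprod (\<rho> (st (\<sigma> (ebasis q))) + st (\<rho> (ebasis q))) (st (ebasis r)))"
        unfolding Bq Cq by (simp add: glin_add[OF glin_tprod1] glin_add[OF glin_tprod2])
      also have "\<dots> = 0" by (simp add: c2(2))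
      finally show ?thesis .
    qed
    ultimately show ?thesis ..
  qed
  have g1: "glin (\<lambda>b. loc i \<sigma> (st (loc i \<sigma> b)))"
    by (intro glin_comp[OF glin_loc glin_comp[OF glin_starT glin_loc]])
  have g2: "glin (\<lambda>b. loc i \<rho> (st (loc i \<sigma> b)) + st (loc i \<rho> b))"
    by (intro glin_plus glin_comp[OF glin_loc glin_comp[OF glin_starT glin_loc]] glin_comp[OF glin_starT glin_loc])
  have "loc i \<sigma> (st (loc i \<sigma> b)) = st b"
    by (rule lin_eq_keys[OF g1 glin_starT]) (use base b in \<open>auto simp: tens_space_def\<close>)
  moreover have "loc i \<rho> (st (loc i \<sigma> b)) + st (loc i \<rho> b) = 0"
    using lin_eq_keys[OF g2 glin_zero_fun, of b] base b by (auto simp: tens_space_def)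
  ultimately show ?thesis ..
qed

lemma R1:
  assumes i: "i \<in> {1..<d}"
  shows "H i * iota (st (emb oneB d i S)) + iota (st (emb oneB d i R)) = H i * H i"
proof -
  have E: "st (emb oneB d i S) \<in> T" "st (emb oneB d i R) \<in> T" using st_T emb_T[OF i] S_in R_in by auto
  have "H i * iota (st (emb oneB d i S)) + iota (st (emb oneB d i R)) =
      iota (loc i \<sigma> (st (emb oneB d i S))) * H i + (iota (loc i \<rho> (st (emb oneB d i S))) + iota (st (emb oneB d i R)))"
    by (simp add: mixed[OF i E(1)] add.assoc)
  also have "\<dots> = iota (emb oneB d i S) * H i + iota (emb oneB d i R)"
    by (simp add: L1[OF i] iota_add[OF loc_rho_T[OF i E(1)] E(2), symmetric])
  also have "\<dots> = H i * H i" by (simp add: quad[OF i])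
  finally show ?thesis .
qed

lemma R2:
  assumes i: "i \<in> {1..<d}" and c: "c \<in> T"
  shows "iota (st c) * H i = H i * iota (st (loc i \<sigma> c)) + iota (st (loc i \<rho> c))"
proof -
  have m: "st (loc i \<sigma> c) \<in> T" "st (loc i \<rho> c) \<in> T" using st_T loc_sigma_T[OF i c] loc_rho_T[OF i c] by auto
  have "H i * iota (st (loc i \<sigma> c)) + iota (st (loc i \<rho> c)) =
      iota (loc i \<sigma> (st (loc i \<sigma> c))) * H i + (iota (loc i \<rho> (st (loc i \<sigma> c))) + iota (st (loc i \<rho> c)))"
    by (simp add: mixed[OF i m(1)] add.assoc)
  also have "\<dots> = iota (st c) * H i + iota 0"
    using L2[OF i c] by (simp add: iota_add[OF loc_rho_T[OF i m(1)] m(2), symmetric])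
  finally show ?thesis by simp
qed

subsection \<open>Formal words\<close>

definition ev1 where
  "ev1 g = (case g of Hg i \<Rightarrow> H i | Bg b \<Rightarrow> iota b)"
definition evr1 where
  "evr1 g = (case g of Hg i \<Rightarrow> H i | Bg b \<Rightarrow> iota (st b))"
definition ev where
  "ev gs = prod_list (map ev1 gs)"
definition evr where
  "evr gs = prod_list (rev (map evr1 gs))"
definition valid where
  "valid gs \<longleftrightarrow> (\<forall>g\<in>set gs. case g of Hg i \<Rightarrow> i \<in> {1..<d} | Bg b \<Rightarrow> b \<in> T)"

lemma ev_Nil [simp]: "ev [] = 1" and evr_Nil [simp]: "evr [] = 1"
  by (simp_all add: ev_def evr_def)
lemma ev_Cons_H [simp]: "ev (Hg i # gs) = H i * ev gs" by (simp add: ev_def ev1_def)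
lemma ev_Cons_B [simp]: "ev (Bg b # gs) = iota b * ev gs" by (simp add: ev_def ev1_def)
lemma evr_Cons_H [simp]: "evr (Hg i # gs) = evr gs * H i" by (simp add: evr_def evr1_def)
lemma evr_Cons_B [simp]: "evr (Bg b # gs) = evr gs * iota (st b)" by (simp add: evr_def evr1_def)
lemma ev_append: "ev (xs @ ys) = ev xs * ev ys" by (simp add: ev_def)
lemma evr_append: "evr (xs @ ys) = evr ys * evr xs" by (simp add: evr_def)
lemma ev_map_Hg [simp]: "ev (map Hg u) = prod_list (map H u)" by (induction u) simp_all
lemma evr_map_Hg [simp]: "evr (map Hg u) = prod_list (map H (rev u))" by (induction u) simp_all

lemma valid_Nil [simp]: "valid []" by (simp add: valid_def)
lemma valid_Cons_H [simp]: "valid (Hg i # gs) \<longleftrightarrow> i \<in> {1..<d} \<and> valid gs" by (simp add: valid_def)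
lemma valid_Cons_B [simp]: "valid (Bg b # gs) \<longleftrightarrow> b \<in> T \<and> valid gs" by (simp add: valid_def)
lemma valid_append [simp]: "valid (xs @ ys) \<longleftrightarrow> valid xs \<and> valid ys" by (auto simp: valid_def)
lemma valid_map_Hg [simp]: "valid (map Hg u) \<longleftrightarrow> set u \<subseteq> {1..<d}" by (auto simp: valid_def)

lemma valid_hs: "valid gs \<Longrightarrow> set (hs gs) \<subseteq> {1..<d}"
  by (induction gs rule: hs.induct) auto

inductive_set Sp for n :: nat where
  Sp_gen: "valid gs \<Longrightarrow> nH gs \<le> n \<Longrightarrow> (ev gs, evr gs) \<in> Sp n"
| Sp_zero: "(0, 0) \<in> Sp n"
| Sp_add: "(x, y) \<in> Sp n \<Longrightarrow> (x', y') \<in> Sp n \<Longrightarrow> (x + x', y + y') \<in> Sp n"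
| Sp_smul: "(x, y) \<in> Sp n \<Longrightarrow> (smul c x, smul c y) \<in> Sp n"

lemma Sp_mono: "(x0, y0) \<in> Sp m \<Longrightarrow> m \<le> n \<Longrightarrow> (x0, y0) \<in> Sp n"
proof (induction rule: Sp.induct)
  case (Sp_gen gs) then show ?case by (intro Sp.Sp_gen) auto
next
  case Sp_zero show ?case by (rule Sp.Sp_zero)
next
  case (Sp_add x y x' y') then show ?case by (intro Sp.Sp_add) auto
next
  case (Sp_smul x y c) then show ?case by (intro Sp.Sp_smul) auto
qed

lemma Sp_mult_gen:
  assumes g: "valid gs" "nH gs \<le> n"
  shows "(x', y') \<in> Sp m \<Longrightarrow> (ev gs * x', y' * evr gs) \<in> Sp (n + m)"
proof (induction rule: Sp.induct)
  case (Sp_gen hs')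
  have "(ev (gs @ hs'), evr (gs @ hs')) \<in> Sp (n + m)"
    using g Sp_gen by (intro Sp.Sp_gen) (auto simp: nH_append)
  then show ?case by (simp add: ev_append evr_append)
next
  case Sp_zero then show ?case using Sp.Sp_zero by simp
next
  case (Sp_add x y x' y')
  then show ?case using Sp.Sp_add by (simp add: distrib_left distrib_right)
next
  case (Sp_smul x y c)
  then show ?case using Sp.Sp_smul by (simp add: smul_mult_l smul_mult_r)
qed

lemma Sp_mult:
  assumes "(x', y') \<in> Sp m"
  shows "(x, y) \<in> Sp n \<Longrightarrow> (x * x', y' * y) \<in> Sp (n + m)"
proof (induction rule: Sp.induct)
  case (Sp_gen gs) then show ?case by (rule Sp_mult_gen[OF _ _ assms])
next
  case Sp_zero then show ?case using Sp.Sp_zero by simp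
next
  case (Sp_add x y x'' y'')
  then show ?case using Sp.Sp_add by (simp add: distrib_left distrib_right)
next
  case (Sp_smul x y c)
  then show ?case using Sp.Sp_smul by (simp add: smul_mult_l smul_mult_r)
qed

lemma Sp_gen1: "valid gs \<Longrightarrow> (ev gs, evr gs) \<in> Sp (nH gs)"
  by (rule Sp_gen) simp_all

lemma push:
  "valid gs \<Longrightarrow> \<exists>c x y. c \<in> T \<and> ((x, y) = (0, 0) \<or> (\<exists>m < nH gs. (x, y) \<in> Sp m)) \<and>
      ev gs = iota c * prod_list (map H (hs gs)) + x \<and>
      evr gs = prod_list (map H (rev (hs gs))) * iota (st c) + y"
proof (induction gs rule: hs.induct)
  case 1
  show ?case
    by (intro exI[of _ "oneT oneB d"] exI[of _ 0])
       (simp add: ts_oneT iota_one starT_oneT[OF star_B])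
next
  case (2 i gs)
  then have i: "i \<in> {1..<d}" and vg: "valid gs" by auto
  obtain c x y where c: "c \<in> T" and xy: "(x, y) = (0, 0) \<or> (\<exists>m < nH gs. (x, y) \<in> Sp m)"
    and e1: "ev gs = iota c * prod_list (map H (hs gs)) + x"
    and e2: "evr gs = prod_list (map H (rev (hs gs))) * iota (st c) + y"
    using 2(1) vg by blast
  define u where "u = hs gs"
  define P where "P = prod_list (map H u)"
  define P' where "P' = prod_list (map H (rev u))"
  have uv: "set u \<subseteq> {1..<d}" using valid_hs[OF vg] by (simp add: u_def)
  have lu: "length u = nH gs" by (simp add: u_def length_hs)
  have sc: "loc i \<sigma> c \<in> T" "loc i \<rho> c \<in> T" using loc_sigma_T[OF i c] loc_rho_T[OF i c] .
  define x' where "x' = iota (loc i \<rho> c) * P + H i * x"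
  define y' where "y' = P' * iota (st (loc i \<rho> c)) + y * H i"
  have E1: "ev (Hg i # gs) = iota (loc i \<sigma> c) * prod_list (map H (hs (Hg i # gs))) + x'"
  proof -
    have "ev (Hg i # gs) = (H i * iota c) * P + H i * x"
      by (simp add: e1 P_def u_def distrib_left mult.assoc)
    also have "\<dots> = iota (loc i \<sigma> c) * (H i * P) + x'"
      by (simp add: mixed[OF i c] distrib_right x'_def mult.assoc add.assoc)
    finally show ?thesis by (simp add: P_def u_def)
  qed
  have E2: "evr (Hg i # gs) = prod_list (map H (rev (hs (Hg i # gs)))) * iota (st (loc i \<sigma> c)) + y'"
  proof -
    have "evr (Hg i # gs) = P' * (iota (st c) * H i) + y * H i"
      by (simp add: e2 P'_def u_def distrib_right mult.assoc)
    also have "\<dots> = (P' * H i) * iota (st (loc i \<sigma> c)) + y'"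
      by (simp add: R2[OF i c] distrib_left y'_def mult.assoc add.assoc)
    finally show ?thesis by (simp add: P'_def u_def)
  qed
  have R: "(x', y') \<in> Sp (nH gs)"
  proof -
    have a: "(iota (loc i \<rho> c) * P, P' * iota (st (loc i \<rho> c))) \<in> Sp (nH gs)"
      using Sp_gen1[of "Bg (loc i \<rho> c) # map Hg u"] sc uv lu by (simp add: P_def P'_def)
    have b: "(H i * x, y * H i) \<in> Sp (nH gs)"
      using xy
    proof
      assume "(x, y) = (0, 0)" then show ?thesis using Sp_zero by simp
    next
      assume "\<exists>m < nH gs. (x, y) \<in> Sp m"
      then obtain m where m: "m < nH gs" "(x, y) \<in> Sp m" by blast
      have "(H i, H i) \<in> Sp 1" using Sp_gen1[of "[Hg i]"] i by simp
      from Sp_mult[OF m(2) this] have "(H i * x, y * H i) \<in> Sp (1 + m)" .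
      then show ?thesis by (rule Sp_mono) (use m in simp)
    qed
    show ?thesis unfolding x'_def y'_def by (rule Sp_add[OF a b])
  qed
  show ?case
    by (intro exI[of _ "loc i \<sigma> c"] exI[of _ x'] exI[of _ y'] conjI sc(1) E1 E2) (use R in auto)
next
  case (3 b gs)
  then have b: "b \<in> T" and vg: "valid gs" by auto
  obtain c x y where c: "c \<in> T" and xy: "(x, y) = (0, 0) \<or> (\<exists>m < nH gs. (x, y) \<in> Sp m)"
    and e1: "ev gs = iota c * prod_list (map H (hs gs)) + x"
    and e2: "evr gs = prod_list (map H (rev (hs gs))) * iota (st c) + y"
    using 3(1) vg by blast
  have bc: "mulT mulB b c \<in> T" by (rule ts_mulT[OF b c])
  have E1: "ev (Bg b # gs) = iota (mulT mulB b c) * prod_list (map H (hs (Bg b # gs))) + iota b * x"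
    by (simp add: e1 iota_mult[OF b c] distrib_left mult.assoc)
  have E2: "evr (Bg b # gs) = prod_list (map H (rev (hs (Bg b # gs)))) * iota (st (mulT mulB b c)) + y * iota (st b)"
    by (simp add: e2 starT_mulT[OF B_alg star_B b c] iota_mult[OF st_T[OF c] st_T[OF b]] distrib_right mult.assoc)
  have R: "(iota b * x, y * iota (st b)) = (0, 0) \<or> (\<exists>m < nH (Bg b # gs). (iota b * x, y * iota (st b)) \<in> Sp m)"
    using xy
  proof
    assume "(x, y) = (0, 0)" then show ?thesis by simp
  next
    assume "\<exists>m < nH gs. (x, y) \<in> Sp m"
    then obtain m where m: "m < nH gs" "(x, y) \<in> Sp m" by blast
    have "(iota b, iota (st b)) \<in> Sp 0" using Sp_gen1[of "[Bg b]"] b by simp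
    from Sp_mult[OF m(2) this] have "(iota b * x, y * iota (st b)) \<in> Sp m" by simp
    then show ?thesis using m(1) by auto
  qed
  show ?case
    by (intro exI[of _ "mulT mulB b c"] exI[of _ "iota b * x"] exI[of _ "y * iota (st b)"] conjI bc E1 E2 R)
qed

end



context qwp_cond begin

definition phi0 where
  "phi0 z = Gam (\<lambda>p. prod_list (map H (rev (cw d (snd p)))) * iota (st (ebasis (fst p)))) z"

lemma phi0_add: "phi0 (x + y) = phi0 x + phi0 y" by (simp add: phi0_def Gam_add)
lemma phi0_smul: "phi0 (smul c x) = smul c (phi0 x)" by (simp add: phi0_def Gam_smul)
lemma phi0_zero [simp]: "phi0 0 = 0" by (simp add: phi0_def Gam_zero)
lemma phi0_sum: "phi0 (sum f A) = (\<Sum>i\<in>A. phi0 (f i))" by (simp add: phi0_def Gam_sum)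

lemma iota_st: "b \<in> T \<Longrightarrow> iota (st b) = (\<Sum>a\<in>Poly_Mapping.keys b. smul (Poly_Mapping.lookup b a) (iota (st (ebasis a))))"
proof -
  assume b: "b \<in> T"
  have "st b = lin_ext (\<lambda>a. st (ebasis a)) b" by (rule glin_expand[OF glin_starT])
  moreover have "iota (lin_ext (\<lambda>a. st (ebasis a)) b) = (\<Sum>a\<in>Poly_Mapping.keys b. smul (Poly_Mapping.lookup b a) (iota (st (ebasis a))))"
  proof (rule iota_lin_ext)
    fix a assume "a \<in> Poly_Mapping.keys b"
    then have "length a = d" using b by (simp add: tens_space_def)
    then show "st (ebasis a) \<in> T" by (intro st_T ts_ebasis)
  qed
  ultimately show ?thesis by simp
qed

lemma phi0_mono:
  assumes b: "b \<in> T" and w: "w permutes {1..d}"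
  shows "phi0 (iota b * Hw H d w) = prod_list (map H (rev (cw d w))) * iota (st b)"
  by (simp add: phi0_def Gam_basis[OF b w] iota_st[OF b] sum_distrib_left smul_mult_r)

lemma Sp_phi:
  assumes IH: "\<And>gs. valid gs \<Longrightarrow> nH gs \<le> n \<Longrightarrow> phi0 (ev gs) = evr gs"
  shows "(x, y) \<in> Sp n \<Longrightarrow> phi0 x = y"
proof (induction rule: Sp.induct)
  case (Sp_gen gs) then show ?case by (rule IH)
next
  case Sp_zero then show ?case by simp
next
  case (Sp_add x y x' y') then show ?case by (simp add: phi0_add)
next
  case (Sp_smul x y c) then show ?case by (simp add: phi0_smul)
qed

lemma prodH_rev_beq: "beq d u v \<Longrightarrow> prod_list (map H (rev u)) = prod_list (map H (rev v))"
  by (rule prod_beq[OF beq_rev])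

lemma mono_claim:
  assumes IH: "\<And>m gs. m < length u \<Longrightarrow> valid gs \<Longrightarrow> nH gs \<le> m \<Longrightarrow> phi0 (ev gs) = evr gs"
    and u: "set u \<subseteq> {1..<d}" and c: "c \<in> T"
  shows "phi0 (iota c * prod_list (map H u)) = prod_list (map H (rev u)) * iota (st c)"
proof (cases "redw d u")
  case True
  define w where "w = word_perm u"
  have wp: "w permutes {1..d}" unfolding w_def using redw_permutes[OF True] .
  have cwp: "word_perm (cw d w) = w" using cw_props[OF wp] by blast
  have b: "beq d u (cw d w)"
    by (rule matsumoto[OF True cw_redw[OF wp]]) (unfold cwp, simp add: w_def)
  have "phi0 (iota c * prod_list (map H u)) = phi0 (iota c * Hw H d w)"
    by (simp add: Hw_cw prod_beq[OF b])
  also have "\<dots> = prod_list (map H (rev (cw d w))) * iota (st c)" by (rule phi0_mono[OF c wp])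
  also have "\<dots> = prod_list (map H (rev u)) * iota (st c)" by (simp add: prodH_rev_beq[OF b])
  finally show ?thesis .
next
  case False
  obtain u1 u2 i where i: "i \<in> {1..<d}" and s1: "set u1 \<subseteq> {1..<d}" and s2: "set u2 \<subseteq> {1..<d}"
    and len: "length u1 + length u2 + 2 = length u" and b: "beq d u (u1 @ [i, i] @ u2)"
    using nonreduced_split[OF u False] by blast
  define Si where "Si = emb oneB d i S"
  define Ri where "Ri = emb oneB d i R"
  have SiT: "Si \<in> T" "Ri \<in> T" unfolding Si_def Ri_def using emb_T[OF i] S_in R_in by auto
  define gs1 where "gs1 = Bg c # map Hg u1 @ Bg Si # map Hg (i # u2)"
  define gs2 where "gs2 = Bg c # map Hg u1 @ Bg Ri # map Hg u2"
  have v1: "valid gs1" "valid gs2" unfolding gs1_def gs2_def using c s1 s2 i SiT by auto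
  have n1: "nH gs1 < length u" "nH gs2 < length u" unfolding gs1_def gs2_def using len by (simp_all add: nH_append)
  have ph1: "phi0 (ev gs1) = evr gs1" by (rule IH[OF n1(1) v1(1) order_refl])
  have ph2: "phi0 (ev gs2) = evr gs2" by (rule IH[OF n1(2) v1(2) order_refl])
  let ?P1 = "prod_list (map H u1)" and ?P2 = "prod_list (map H u2)"
  let ?Q1 = "prod_list (map H (rev u1))" and ?Q2 = "prod_list (map H (rev u2))"
  have "iota c * prod_list (map H u) = iota c * (?P1 * (H i * H i) * ?P2)"
    by (simp add: prod_beq[OF b] mult.assoc)
  also have "\<dots> = ev gs1 + ev gs2"
    by (simp add: gs1_def gs2_def ev_append quad[OF i] Si_def Ri_def distrib_left distrib_right mult.assoc)
  finally have e1: "iota c * prod_list (map H u) = ev gs1 + ev gs2" .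
  have "prod_list (map H (rev u)) * iota (st c) = ?Q2 * (H i * H i) * ?Q1 * iota (st c)"
    by (simp add: prodH_rev_beq[OF b] mult.assoc)
  also have "\<dots> = ?Q2 * (H i * iota (st Si) + iota (st Ri)) * ?Q1 * iota (st c)"
    by (simp add: R1[OF i] Si_def Ri_def)
  also have "\<dots> = evr gs1 + evr gs2"
    by (simp add: gs1_def gs2_def evr_append distrib_left distrib_right mult.assoc)
  finally have e2: "prod_list (map H (rev u)) * iota (st c) = evr gs1 + evr gs2" .
  show ?thesis unfolding e1 e2 by (simp add: phi0_add ph1 ph2)
qed

lemma claim: "valid gs \<Longrightarrow> nH gs \<le> n \<Longrightarrow> phi0 (ev gs) = evr gs"
proof (induction n arbitrary: gs rule: less_induct)
  case (less n)
  have IH: "phi0 (ev hs') = evr hs'" if "m < n" "valid hs'" "nH hs' \<le> m" for m hs'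
    using less.IH that by blast
  show ?case
  proof (cases "nH gs < n")
    case True show ?thesis using IH[OF True less.prems(1) order_refl] .
  next
    case False
    then have nn: "nH gs = n" using less.prems(2) by simp
    obtain c x y where c: "c \<in> T" and xy: "(x, y) = (0, 0) \<or> (\<exists>m < nH gs. (x, y) \<in> Sp m)"
      and e1: "ev gs = iota c * prod_list (map H (hs gs)) + x"
      and e2: "evr gs = prod_list (map H (rev (hs gs))) * iota (st c) + y"
      using push[OF less.prems(1)] by blast
    have px: "phi0 x = y"
      using xy
    proof
      assume "(x, y) = (0, 0)" then show ?thesis by simp
    next
      assume "\<exists>m < nH gs. (x, y) \<in> Sp m"
      then obtain m where m: "m < nH gs" "(x, y) \<in> Sp m" by blast
      show ?thesis
        by (rule Sp_phi[OF _ m(2)]) (rule IH[of m], use m nn in auto)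
    qed
    have pm: "phi0 (iota c * prod_list (map H (hs gs))) = prod_list (map H (rev (hs gs))) * iota (st c)"
    proof (rule mono_claim[OF _ valid_hs[OF less.prems(1)] c])
      show "phi0 (ev hs') = evr hs'" if "m < length (hs gs)" "valid hs'" "nH hs' \<le> m" for m hs'
        using IH[of m hs'] that nn by (simp add: length_hs)
    qed
    show ?thesis by (simp add: e1 e2 phi0_add px pm)
  qed
qed

lemma phi0_ev: "valid gs \<Longrightarrow> phi0 (ev gs) = evr gs"
  using claim by blast

lemma SpA_phi: "(x, y) \<in> Sp n \<Longrightarrow> phi0 x = y"
  by (rule Sp_phi[OF phi0_ev])

lemma SpA_sum:
  assumes "finite A" "\<And>p. p \<in> A \<Longrightarrow> \<exists>n. (f p, g p) \<in> Sp n"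
  shows "\<exists>n. (sum f A, sum g A) \<in> Sp n"
  using assms
proof (induction A rule: finite_induct)
  case empty then show ?case using Sp_zero by auto
next
  case (insert a A)
  obtain n1 where n1: "(f a, g a) \<in> Sp n1" using insert by blast
  obtain n2 where n2: "(sum f A, sum g A) \<in> Sp n2" using insert by blast
  have "(f a + sum f A, g a + sum g A) \<in> Sp (n1 + n2)"
    by (rule Sp_add) (rule Sp_mono, (use n1 n2 in auto))+
  then show ?case using insert by auto
qed

lemma all_rep: "\<exists>y n. (z, y) \<in> Sp n"
proof -
  let ?Y = "\<Sum>p\<in>Poly_Mapping.keys (C z). smul (Poly_Mapping.lookup (C z) p) (evr (Bg (ebasis (fst p)) # map Hg (cw d (snd p))))"
  let ?Z = "\<Sum>p\<in>Poly_Mapping.keys (C z). smul (Poly_Mapping.lookup (C z) p) (iota (ebasis (fst p)) * Hw H d (snd p))"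
  have "\<exists>n. (?Z, ?Y) \<in> Sp n"
  proof (rule SpA_sum)
    fix p assume p: "p \<in> Poly_Mapping.keys (C z)"
    have A: "(ev (Bg (ebasis (fst p)) # map Hg (cw d (snd p))), evr (Bg (ebasis (fst p)) # map Hg (cw d (snd p))))
       \<in> Sp (length (cw d (snd p)))"
      by (rule Sp_gen) (use Dom_mem[OF p] cw_props[of "snd p" d] in \<open>auto intro: ts_ebasis\<close>)
    have evq: "ev (Bg (ebasis (fst p)) # map Hg (cw d (snd p))) = iota (ebasis (fst p)) * Hw H d (snd p)"
      by (simp add: Hw_cw)
    have B: "(smul (Poly_Mapping.lookup (C z) p) (iota (ebasis (fst p)) * Hw H d (snd p)),
        smul (Poly_Mapping.lookup (C z) p) (evr (Bg (ebasis (fst p)) # map Hg (cw d (snd p)))))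
       \<in> Sp (length (cw d (snd p)))"
      using Sp_smul[OF A, of "Poly_Mapping.lookup (C z) p"] unfolding evq .
    then show "\<exists>n. (smul (Poly_Mapping.lookup (C z) p) (iota (ebasis (fst p)) * Hw H d (snd p)),
        smul (Poly_Mapping.lookup (C z) p) (evr (Bg (ebasis (fst p)) # map Hg (cw d (snd p))))) \<in> Sp n" by (rule exI)
  qed simp
  then obtain n where n: "(?Z, ?Y) \<in> Sp n" by blast
  have eqz: "(z, ?Y) = (?Z, ?Y)" using expand_W[of z] by (rule arg_cong[where f="\<lambda>t. (t, ?Y)"])
  have "(z, ?Y) \<in> Sp n" unfolding eqz by (rule n)
  then show ?thesis by blast
qed

lemma phi0_anti: "phi0 (x * y) = phi0 y * phi0 x"
proof -
  obtain ax n where ax: "(x, ax) \<in> Sp n" using all_rep by blast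
  obtain ay m where ay: "(y, ay) \<in> Sp m" using all_rep by blast
  have "(x * y, ay * ax) \<in> Sp (n + m)" by (rule Sp_mult[OF ay ax])
  then have "phi0 (x * y) = ay * ax" by (rule SpA_phi)
  also have "\<dots> = phi0 y * phi0 x" using SpA_phi[OF ax] SpA_phi[OF ay] by simp
  finally show ?thesis .
qed

lemma phi0_one: "phi0 1 = 1"
  using phi0_ev[of "[]"] by simp

lemma phi0_iota: "b \<in> T \<Longrightarrow> phi0 (iota b) = iota (st b)"
  using phi0_ev[of "[Bg b]"] by simp

lemma phi0_H: "i \<in> {1..<d} \<Longrightarrow> phi0 (H i) = H i"
  using phi0_ev[of "[Hg i]"] by simp

lemma phi0_anti_hom: "anti_hom_W smul phi0"
  unfolding anti_hom_W_def by (simp add: phi0_add phi0_smul phi0_one phi0_anti)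

end



lemma inv_glin:
  assumes g: "glin f" and b: "bij f"
  shows "glin (inv f)"
proof (rule glinI)
  have fi: "f (inv f y) = y" for y using b by (simp add: bij_is_surj surj_f_inv_f)
  have if_: "inv f (f y) = y" for y using b by (simp add: bij_is_inj inv_f_f)
  fix x y c
  show "inv f (x + y) = inv f x + inv f y"
  proof -
    have "f (inv f x + inv f y) = x + y" by (simp add: glin_add[OF g] fi)
    then show ?thesis using if_ by metis
  qed
  show "inv f (pscale c x) = pscale c (inv f x)"
  proof -
    have "f (pscale c (inv f x)) = pscale c x" by (simp add: glin_pscale[OF g] fi)
    then show ?thesis using if_ by metis
  qed
qed

context qwp begin

lemma bij_phi:
  assumes phi: "anti_hom_W smul \<phi>" and phi_iota: "\<forall>b\<in>T. \<phi> (iota b) = iota (st b)"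
    and phi_H: "\<forall>i\<in>{1..<d}. \<phi> (H i) = H i"
  shows "bij \<phi>"
proof -
  have padd: "\<phi> (x + y) = \<phi> x + \<phi> y" for x y using phi by (simp add: anti_hom_W_def)
  have pmul: "\<phi> (x * y) = \<phi> y * \<phi> x" for x y using phi by (simp add: anti_hom_W_def)
  have psm: "\<phi> (smul c x) = smul c (\<phi> x)" for c x using phi by (simp add: anti_hom_W_def)
  have p1: "\<phi> 1 = 1" using phi by (simp add: anti_hom_W_def)
  have p0: "\<phi> 0 = 0" using padd[of 0 0] by simp
  have psum: "\<phi> (sum f A) = (\<Sum>i\<in>A. \<phi> (f i))" for f and A :: "'x set"
    by (induction A rule: infinite_finite_induct) (simp_all add: p0 padd)
  have pP: "\<phi> (prod_list (map H u)) = prod_list (map H (rev u))" if "set u \<subseteq> {1..<d}" for u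
    using that
  proof (induction u)
    case Nil then show ?case by (simp add: p1)
  next
    case (Cons i u) then show ?case by (simp add: pmul phi_H)
  qed
  define \<psi> where "\<psi> x = \<phi> (\<phi> x)" for x
  have ps_add: "\<psi> (x + y) = \<psi> x + \<psi> y" for x y by (simp add: \<psi>_def padd)
  have ps_sm: "\<psi> (smul c x) = smul c (\<psi> x)" for c x by (simp add: \<psi>_def psm)
  have ps_sum: "\<psi> (sum f A) = (\<Sum>i\<in>A. \<psi> (f i))" for f and A :: "'x set"
    by (simp add: \<psi>_def psum)
  have ps_basis: "\<psi> (iota b * Hw H d w) = iota (st (st b)) * Hw H d w" if b: "b \<in> T" and w: "w permutes {1..d}" for b w
  proof -
    have cw: "set (cw d w) \<subseteq> {1..<d}" using cw_props[OF w] by blast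
    have "\<phi> (iota b * Hw H d w) = prod_list (map H (rev (cw d w))) * iota (st b)"
      by (simp add: pmul Hw_cw pP[OF cw] phi_iota b)
    then have "\<psi> (iota b * Hw H d w) = \<phi> (iota (st b)) * \<phi> (prod_list (map H (rev (cw d w))))"
      by (simp add: \<psi>_def pmul)
    also have "\<dots> = iota (st (st b)) * Hw H d w"
      using cw pP[of "rev (cw d w)"] phi_iota st_T[OF b] by (simp add: Hw_cw)
    finally show ?thesis .
  qed
  have gs: "glin starB" and bs: "bij starB" using star_B by (simp_all add: anti_automorphism_B_def)
  have gi: "glin (inv starB)" by (rule inv_glin[OF gs bs])
  define U where "U = starT (inv starB)"
  have fi: "(\<lambda>y. starB (inv starB y)) = (\<lambda>y. y)" using bs by (simp add: bij_is_surj surj_f_inv_f)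
  have if_: "(\<lambda>y. inv starB (starB y)) = (\<lambda>y. y)" using bs by (simp add: bij_is_inj inv_f_f)
  have stU: "st (U x) = x" for x unfolding U_def by (simp add: starT_comp[OF gs] fi starT_id)
  have Ust: "U (st x) = x" for x unfolding U_def by (simp add: starT_comp[OF gi] if_ starT_id)
  define Ut where "Ut x = U (U x)" for x
  have glU: "glin Ut" unfolding Ut_def[abs_def] U_def by (rule glin_comp[OF glin_starT glin_starT])
  have UtT: "x \<in> T \<Longrightarrow> Ut x \<in> T" for x unfolding Ut_def U_def by (intro ts_starT)
  have TU: "st (st (Ut x)) = x" for x by (simp add: Ut_def stU)
  have UT: "Ut (st (st x)) = x" for x by (simp add: Ut_def Ust)
  define \<Theta> where "\<Theta> = Gam (\<lambda>p. iota (Ut (ebasis (fst p))) * Hw H d (snd p))"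
  have Th_basis: "\<Theta> (iota b * Hw H d w) = iota (Ut b) * Hw H d w" if b: "b \<in> T" and w: "w permutes {1..d}" for b w
  proof -
    have m: "Ut (ebasis a) \<in> T" if "a \<in> Poly_Mapping.keys b" for a
      using b that by (intro UtT ts_ebasis) (simp add: tens_space_def)
    have "iota (Ut b) = iota (lin_ext (\<lambda>a. Ut (ebasis a)) b)" by (simp add: glin_expand[OF glU, symmetric])
    also have "\<dots> = (\<Sum>a\<in>Poly_Mapping.keys b. smul (Poly_Mapping.lookup b a) (iota (Ut (ebasis a))))"
      by (rule iota_lin_ext[OF m])
    finally have "iota (Ut b) * Hw H d w = (\<Sum>a\<in>Poly_Mapping.keys b. smul (Poly_Mapping.lookup b a) (iota (Ut (ebasis a)) * Hw H d w))"
      by (simp add: sum_distrib_right smul_mult_l)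
    then show ?thesis unfolding \<Theta>_def by (simp add: Gam_basis[OF b w])
  qed
  have Th_add: "\<Theta> (x + y) = \<Theta> x + \<Theta> y" for x y unfolding \<Theta>_def by (rule Gam_add)
  have Th_sum: "\<Theta> (sum f A) = (\<Sum>i\<in>A. \<Theta> (f i))" for f and A :: "'x set" unfolding \<Theta>_def by (rule Gam_sum)
  have Th_sm: "\<Theta> (smul c x) = smul c (\<Theta> x)" for c x unfolding \<Theta>_def by (rule Gam_smul)
  have left: "\<Theta> (\<psi> z) = z" for z
  proof -
    let ?K = "Poly_Mapping.keys (C z)" and ?c = "Poly_Mapping.lookup (C z)"
    have "\<psi> z = (\<Sum>p\<in>?K. smul (?c p) (\<psi> (iota (ebasis (fst p)) * Hw H d (snd p))))"
      by (subst expand_W) (simp add: ps_sum ps_sm)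
    also have "\<dots> = (\<Sum>p\<in>?K. smul (?c p) (iota (st (st (ebasis (fst p)))) * Hw H d (snd p)))"
      by (rule sum.cong[OF refl]) (use Dom_mem in \<open>simp add: ps_basis ts_ebasis\<close>)
    finally have "\<Theta> (\<psi> z) = (\<Sum>p\<in>?K. smul (?c p) (\<Theta> (iota (st (st (ebasis (fst p)))) * Hw H d (snd p))))"
      by (simp add: Th_sum Th_sm)
    also have "\<dots> = (\<Sum>p\<in>?K. smul (?c p) (iota (ebasis (fst p)) * Hw H d (snd p)))"
      by (rule sum.cong[OF refl]) (use Dom_mem in \<open>simp add: Th_basis UT st_T ts_ebasis\<close>)
    also have "\<dots> = z" by (rule expand_W[symmetric])
    finally show ?thesis .
  qed
  have right: "\<psi> (\<Sum>p\<in>Poly_Mapping.keys (C z). smul (Poly_Mapping.lookup (C z) p) (iota (Ut (ebasis (fst p))) * Hw H d (snd p))) = z" for z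
  proof -
    let ?K = "Poly_Mapping.keys (C z)" and ?c = "Poly_Mapping.lookup (C z)"
    have "\<psi> (\<Sum>p\<in>?K. smul (?c p) (iota (Ut (ebasis (fst p))) * Hw H d (snd p))) =
        (\<Sum>p\<in>?K. smul (?c p) (iota (st (st (Ut (ebasis (fst p))))) * Hw H d (snd p)))"
      by (simp add: ps_sum ps_sm) (rule sum.cong[OF refl], use Dom_mem in \<open>simp add: ps_basis UtT ts_ebasis\<close>)
    also have "\<dots> = (\<Sum>p\<in>?K. smul (?c p) (iota (ebasis (fst p)) * Hw H d (snd p)))" by (simp add: TU)
    also have "\<dots> = z" by (rule expand_W[symmetric])
    finally show ?thesis .
  qed
  show "bij \<phi>"
  proof (rule bijI)
    show "inj \<phi>"
    proof (rule injI)
      fix x y assume "\<phi> x = \<phi> y"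
      then have "\<psi> x = \<psi> y" by (simp add: \<psi>_def)
      then show "x = y" using left by metis
    qed
    show "surj \<phi>"
    proof (rule surjI)
      fix z
      show "\<phi> (\<phi> (\<Sum>p\<in>Poly_Mapping.keys (C z). smul (Poly_Mapping.lookup (C z) p) (iota (Ut (ebasis (fst p))) * Hw H d (snd p)))) = z"
        using right[of z] by (simp add: \<psi>_def)
    qed
  qed
qed

end

theorem theorem7p4:
  fixes mulB :: "('j \<Rightarrow>\<^sub>0 'k::comm_ring_1) \<Rightarrow> ('j \<Rightarrow>\<^sub>0 'k) \<Rightarrow> ('j \<Rightarrow>\<^sub>0 'k)"
    and oneB :: "'j \<Rightarrow>\<^sub>0 'k"
    and starB :: "('j \<Rightarrow>\<^sub>0 'k) \<Rightarrow> ('j \<Rightarrow>\<^sub>0 'k)"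
    and S R :: "'j list \<Rightarrow>\<^sub>0 'k"
    and \<sigma> \<rho> :: "('j list \<Rightarrow>\<^sub>0 'k) \<Rightarrow> ('j list \<Rightarrow>\<^sub>0 'k)"
    and smul :: "'k \<Rightarrow> 'w::ring_1 \<Rightarrow> 'w"
    and iota :: "('j list \<Rightarrow>\<^sub>0 'k) \<Rightarrow> 'w"
    and H :: "nat \<Rightarrow> 'w"
    and d :: nat
  assumes d2: "2 \<le> d"
    and B_alg: "K_algebra_B mulB oneB"
    and star_B: "anti_automorphism_B mulB oneB starB"
    and S_in: "S \<in> tens_space 2" and R_in: "R \<in> tens_space 2"
    and sigma_lin: "lin_on (tens_space 2) \<sigma>" and sigma_into: "\<sigma> ` tens_space 2 \<subseteq> tens_space 2"
    and rho_lin: "lin_on (tens_space 2) \<rho>" and rho_into: "\<rho> ` tens_space 2 \<subseteq> tens_space 2"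
    and rels: "qwp_relations smul iota H d mulB oneB S R \<sigma> \<rho>"
    and PBW: "has_PBW_basis smul iota H d"
  shows "((\<exists>\<phi>. anti_hom_W smul \<phi> \<and>
             (\<forall>b\<in>tens_space d. \<phi> (iota b) = iota (starT starB b)) \<and>
             (\<forall>i\<in>{1..<d}. \<phi> (H i) = H i))
          \<longleftrightarrow>
          ((\<sigma> (starT starB S) = S \<and> \<rho> (starT starB S) + starT starB R = R) \<and>
           (\<forall>b\<in>tens_space 2. \<sigma> (starT starB (\<sigma> b)) = starT starB b \<and>
                               \<rho> (starT starB (\<sigma> b)) + starT starB (\<rho> b) = 0)))
       \<and> ((\<exists>\<phi>. anti_hom_W smul \<phi> \<and>
             (\<forall>b\<in>tens_space d. \<phi> (iota b) = iota (starT starB b)) \<and>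
             (\<forall>i\<in>{1..<d}. \<phi> (H i) = H i))
          \<longrightarrow> (\<exists>\<phi>. anti_hom_W smul \<phi> \<and>
             (\<forall>b\<in>tens_space d. \<phi> (iota b) = iota (starT starB b)) \<and>
             (\<forall>i\<in>{1..<d}. \<phi> (H i) = H i) \<and> bij \<phi>))"
proof -
  have Q: "qwp mulB oneB starB S R \<sigma> \<rho> smul iota H d"
    unfolding qwp_def using d2 B_alg star_B S_in R_in sigma_lin sigma_into rho_lin rho_into rels PBW by blast
  interpret qwp mulB oneB starB S R \<sigma> \<rho> smul iota H d by (rule Q)
  let ?E = "\<exists>\<phi>. anti_hom_W smul \<phi> \<and> (\<forall>b\<in>tens_space d. \<phi> (iota b) = iota (starT starB b)) \<and> (\<forall>i\<in>{1..<d}. \<phi> (H i) = H i)"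
  let ?Cd = "(\<sigma> (starT starB S) = S \<and> \<rho> (starT starB S) + starT starB R = R) \<and>
           (\<forall>b\<in>tens_space 2. \<sigma> (starT starB (\<sigma> b)) = starT starB b \<and> \<rho> (starT starB (\<sigma> b)) + starT starB (\<rho> b) = 0)"
  have fwd: "?E \<Longrightarrow> ?Cd" using forward by blast
  have bwd: "?E" if c: "?Cd"
  proof -
    have Q2: "qwp_cond mulB oneB starB S R \<sigma> \<rho> smul iota H d"
      unfolding qwp_cond_def qwp_cond_axioms_def using Q c by blast
    interpret qc: qwp_cond mulB oneB starB S R \<sigma> \<rho> smul iota H d by (rule Q2)
    show ?thesis using qc.phi0_anti_hom qc.phi0_iota qc.phi0_H by blast
  qed
  have bj: "\<exists>\<phi>. anti_hom_W smul \<phi> \<and> (\<forall>b\<in>tens_space d. \<phi> (iota b) = iota (starT starB b)) \<and>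
             (\<forall>i\<in>{1..<d}. \<phi> (H i) = H i) \<and> bij \<phi>" if e: ?E
  proof -
    obtain \<phi> where p: "anti_hom_W smul \<phi>" "\<forall>b\<in>tens_space d. \<phi> (iota b) = iota (starT starB b)"
      "\<forall>i\<in>{1..<d}. \<phi> (H i) = H i" using e by blast
    show ?thesis using p bij_phi[OF p] by blast
  qed
  show ?thesis using fwd bwd bj by blast
qed


end
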